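(* Let $\{V_q\}_{q\ge1}$ be approximation spaces with $\bigcup_qV_q$ dense in $H^1_0(D)$ and $\{W_p\}_{p\ge1}$ with $\bigcup_pW_p$ dense in $L^2_\Gamma(\mathbb{R}^\mu)$, and set $X_N=V_q\otimes W_p$. For $\tau>0$ let $W_p^\tau=\{I_{\gamma\le\tau}\varphi:\varphi\in W_p\}$, where $I_{\gamma\le\tau}(\mathbf{y},\mathbf{z})=1$ if $\gamma(\mathbf{y},\mathbf{z})\le\tau$ and $0$ otherwise, let $X_N^\tau=V_q\otimes W_p^\tau$, and let $u_N^\tau\in X_N^\tau$ be the Galerkin approximation: $a(u_N^\tau,v)=F(v)$ for all $v\in X_N^\tau$. Then $$\|u-u_N^\tau\|_{X^{(\mathbf{C})}}^2\le\tau\inf_{v\in X_N}\|u-v\|_X^2+\|u\,I_{\gamma>\tau}\|_{X^{(\mathbf{C})}}^2,$$ where $u\in X$ is the solution of $a(u,v)=F(v)$ for all $v\in X$ and $I_{\gamma>\tau}=1-I_{\gamma\le\tau}$; and there exists a sequence of approximation spaces $X_{N(\tau)}^\tau=V_{q(\tau)}\otimes W_{p(\tau)}^\tau$ such that $\|u-u_{N(\tau)}^\tau\|_{X^{(\mathbf{C})}}\to0$ as $\tau\to\infty$.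
   Context: $D\subset\mathbb{R}^d$ bounded open with smooth boundary; $f\in H^{-1}(D)$; $\Gamma=\Gamma_{N_g}\otimes\Gamma_\nu$ a product probability measure on $\mathbb{R}^\mu=\mathbb{R}^{N_g}\times\mathbb{R}^\nu$, $E_\Gamma$ integration against it. $[\mathrm{C}]:D\times\mathbb{R}^\mu\to\mathbb{M}_n^+(\mathbb{R})$ measurable (the parameterized random field coefficient in the paper, either exponential or square type) with a constant $\alpha>0$ and a positive measurable $\gamma<\infty$ on $\mathbb{R}^\mu$ such that $\Gamma$-a.e. and a.e. in $\mathbf{x}$, $\alpha\|\mathbf{h}\|_2^2\le\langle[\mathrm{C}]\mathbf{h},\mathbf{h}\rangle_2\le\gamma\|\mathbf{h}\|_2^2$ for all $\mathbf{h}$. $X=H^1_0(D)\otimes L^2_\Gamma(\mathbb{R}^\mu)$ with $\|v\|_X^2=E_\Gamma(\int_D\|\nabla v\|_2^2d\mathbf{x})$; $a(u,v)=E_\Gamma(\int_D\nabla v\cdot[\mathrm{C}]\nabla u\,d\mathbf{x})$; $F(v)=E_\Gamma(f(v))$; $\|v\|_{X^{(\mathbf{C})}}^2=E_\Gamma(\int_D\nabla v\cdot[\mathrm{C}]\nabla v\,d\mathbf{x})$. *)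

theory Defs
  imports "HOL-Probability.Probability"
begin

definition pd :: "'n::finite \<Rightarrow> (real^'n \<Rightarrow> real) \<Rightarrow> real^'n \<Rightarrow> real" where
  "pd i f x = frechet_derivative f (at x) (axis i 1)"

fun pds :: "'n::finite list \<Rightarrow> (real^'n \<Rightarrow> real) \<Rightarrow> real^'n \<Rightarrow> real" where
  "pds [] f = f"
| "pds (i # is) f = pd i (pds is f)"

definition smooth_fun :: "(real^'n::finite \<Rightarrow> real) \<Rightarrow> bool" where
  "smooth_fun f \<longleftrightarrow> (\<forall>is x. pds is f differentiable (at x))"

definition grad :: "(real^'n::finite \<Rightarrow> real) \<Rightarrow> real^'n \<Rightarrow> real^'n" where
  "grad f x = (\<chi> i. pd i f x)"

definition Cc_inf :: "(real^'n::finite) set \<Rightarrow> (real^'n \<Rightarrow> real) set" where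
  "Cc_inf D = {\<phi>. smooth_fun \<phi> \<and> (\<exists>K. compact K \<and> K \<subseteq> D \<and> (\<forall>x. x \<notin> K \<longrightarrow> \<phi> x = 0))}"

text \<open>Smooth boundary via a global smooth defining function with nonvanishing gradient.\<close>
definition smooth_boundary :: "(real^'n::finite) set \<Rightarrow> bool" where
  "smooth_boundary D \<longleftrightarrow>
     (\<exists>\<rho>. smooth_fun \<rho> \<and> D = {x. \<rho> x < 0} \<and> (\<forall>x. \<rho> x = 0 \<longrightarrow> grad \<rho> x \<noteq> 0))"

definition MD :: "(real^'n::finite) set \<Rightarrow> (real^'n) measure" where
  "MD D = restrict_space lborel D"

text \<open>Elements of H^1_0(D) are represented by pairs (v, grad v).\<close>
definition H1sq :: "(real^'n::finite) set \<Rightarrow> (real^'n \<Rightarrow> real) \<times> (real^'n \<Rightarrow> real^'n) \<Rightarrow> ennreal" where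
  "H1sq D vg = (\<integral>\<^sup>+ x. ennreal ((fst vg x)\<^sup>2 + (norm (snd vg x))\<^sup>2) \<partial>MD D)"

definition H10 :: "(real^'n::finite) set \<Rightarrow> ((real^'n \<Rightarrow> real) \<times> (real^'n \<Rightarrow> real^'n)) set" where
  "H10 D = {(v, g). v \<in> borel_measurable lborel \<and> g \<in> borel_measurable lborel \<and>
     (\<exists>\<phi>. (\<forall>k. \<phi> k \<in> Cc_inf D) \<and>
        (\<lambda>k. H1sq D (\<lambda>x. \<phi> k x - v x, \<lambda>x. grad (\<phi> k) x - g x)) \<longlonglongrightarrow> 0)}"

definition H_minus1 :: "(real^'n::finite) set \<Rightarrow> ((real^'n \<Rightarrow> real) \<Rightarrow> (real^'n \<Rightarrow> real^'n) \<Rightarrow> real) \<Rightarrow> bool" where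
  "H_minus1 D f \<longleftrightarrow>
     (\<forall>v g w h a b. (v, g) \<in> H10 D \<longrightarrow> (w, h) \<in> H10 D \<longrightarrow>
        f (\<lambda>x. a * v x + b * w x) (\<lambda>x. a *\<^sub>R g x + b *\<^sub>R h x) = a * f v g + b * f w h) \<and>
     (\<exists>M. \<forall>(v, g) \<in> H10 D. \<bar>f v g\<bar> \<le> M * sqrt (enn2real (H1sq D (v, g))))"

definition L2 :: "'w measure \<Rightarrow> ('w \<Rightarrow> real) set" where
  "L2 \<Gamma> = {\<psi>. \<psi> \<in> borel_measurable \<Gamma> \<and> (\<integral>\<^sup>+ \<omega>. ennreal ((\<psi> \<omega>)\<^sup>2) \<partial>\<Gamma>) < \<infinity>}"

type_synonym ('n, 'w) field = "(real^'n \<Rightarrow> 'w \<Rightarrow> real) \<times> (real^'n \<Rightarrow> 'w \<Rightarrow> real^'n)"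

text \<open>Elements of X = H^1_0(D) (x) L^2_Gamma are pairs (v, grad_x v).\<close>
definition pdiff :: "('n::finite, 'w) field \<Rightarrow> ('n, 'w) field \<Rightarrow> ('n, 'w) field" where
  "pdiff U W = (\<lambda>x \<omega>. fst U x \<omega> - fst W x \<omega>, \<lambda>x \<omega>. snd U x \<omega> - snd W x \<omega>)"

definition tens :: "nat \<Rightarrow> (nat \<Rightarrow> (real^'n::finite \<Rightarrow> real) \<times> (real^'n \<Rightarrow> real^'n)) \<Rightarrow> (nat \<Rightarrow> 'w \<Rightarrow> real) \<Rightarrow> ('n, 'w) field" where
  "tens m \<phi> \<psi> = (\<lambda>x \<omega>. \<Sum>i<m. fst (\<phi> i) x * \<psi> i \<omega>, \<lambda>x \<omega>. \<Sum>i<m. \<psi> i \<omega> *\<^sub>R snd (\<phi> i) x)"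

definition tensor :: "((real^'n::finite \<Rightarrow> real) \<times> (real^'n \<Rightarrow> real^'n)) set \<Rightarrow> ('w \<Rightarrow> real) set \<Rightarrow> ('n, 'w) field set" where
  "tensor V W = {tens m \<phi> \<psi> | m \<phi> \<psi>. (\<forall>i<m. \<phi> i \<in> V) \<and> (\<forall>i<m. \<psi> i \<in> W)}"

definition Xfullsq :: "(real^'n::finite) set \<Rightarrow> 'w measure \<Rightarrow> ('n, 'w) field \<Rightarrow> ennreal" where
  "Xfullsq D \<Gamma> U = (\<integral>\<^sup>+ \<omega>. \<integral>\<^sup>+ x. ennreal ((fst U x \<omega>)\<^sup>2 + (norm (snd U x \<omega>))\<^sup>2) \<partial>MD D \<partial>\<Gamma>)"

definition Xspace :: "(real^'n::finite) set \<Rightarrow> 'w measure \<Rightarrow> ('n, 'w) field set" where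
  "Xspace D \<Gamma> = {U. (\<lambda>(x, \<omega>). fst U x \<omega>) \<in> borel_measurable (lborel \<Otimes>\<^sub>M \<Gamma>) \<and>
      (\<lambda>(x, \<omega>). snd U x \<omega>) \<in> borel_measurable (lborel \<Otimes>\<^sub>M \<Gamma>) \<and>
      (\<exists>S. (\<forall>k. S k \<in> tensor ((\<lambda>\<phi>. (\<phi>, grad \<phi>)) ` Cc_inf D) (L2 \<Gamma>)) \<and>
           (\<lambda>k. Xfullsq D \<Gamma> (pdiff U (S k))) \<longlonglongrightarrow> 0)}"

definition normXsq :: "(real^'n::finite) set \<Rightarrow> 'w measure \<Rightarrow> ('n, 'w) field \<Rightarrow> ennreal" where
  "normXsq D \<Gamma> U = (\<integral>\<^sup>+ \<omega>. \<integral>\<^sup>+ x. ennreal ((norm (snd U x \<omega>))\<^sup>2) \<partial>MD D \<partial>\<Gamma>)"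

definition normCsq :: "(real^'n::finite) set \<Rightarrow> 'w measure \<Rightarrow> (real^'n \<Rightarrow> 'w \<Rightarrow> real^'n^'n) \<Rightarrow> ('n, 'w) field \<Rightarrow> ennreal" where
  "normCsq D \<Gamma> C U = (\<integral>\<^sup>+ \<omega>. \<integral>\<^sup>+ x. ennreal (snd U x \<omega> \<bullet> (C x \<omega> *v snd U x \<omega>)) \<partial>MD D \<partial>\<Gamma>)"

definition a_integrable :: "(real^'n::finite) set \<Rightarrow> 'w measure \<Rightarrow> (real^'n \<Rightarrow> 'w \<Rightarrow> real^'n^'n) \<Rightarrow> ('n, 'w) field \<Rightarrow> ('n, 'w) field \<Rightarrow> bool" where
  "a_integrable D \<Gamma> C U W \<longleftrightarrow>
     integrable (MD D \<Otimes>\<^sub>M \<Gamma>) (\<lambda>(x, \<omega>). snd W x \<omega> \<bullet> (C x \<omega> *v snd U x \<omega>))"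

definition a_form :: "(real^'n::finite) set \<Rightarrow> 'w measure \<Rightarrow> (real^'n \<Rightarrow> 'w \<Rightarrow> real^'n^'n) \<Rightarrow> ('n, 'w) field \<Rightarrow> ('n, 'w) field \<Rightarrow> real" where
  "a_form D \<Gamma> C U W = (\<integral> \<omega>. (\<integral> x. snd W x \<omega> \<bullet> (C x \<omega> *v snd U x \<omega>) \<partial>MD D) \<partial>\<Gamma>)"

definition F_form :: "'w measure \<Rightarrow> ((real^'n::finite \<Rightarrow> real) \<Rightarrow> (real^'n \<Rightarrow> real^'n) \<Rightarrow> real) \<Rightarrow> ('n, 'w) field \<Rightarrow> real" where
  "F_form \<Gamma> f W = (\<integral> \<omega>. f (\<lambda>x. fst W x \<omega>) (\<lambda>x. snd W x \<omega>) \<partial>\<Gamma>)"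

definition galerkin_sol :: "(real^'n::finite) set \<Rightarrow> 'w measure \<Rightarrow> (real^'n \<Rightarrow> 'w \<Rightarrow> real^'n^'n) \<Rightarrow>
    ((real^'n \<Rightarrow> real) \<Rightarrow> (real^'n \<Rightarrow> real^'n) \<Rightarrow> real) \<Rightarrow> ('n, 'w) field set \<Rightarrow> ('n, 'w) field \<Rightarrow> bool" where
  "galerkin_sol D \<Gamma> C f S U \<longleftrightarrow> U \<in> S \<and>
     (\<forall>W \<in> S. a_integrable D \<Gamma> C U W \<and> a_form D \<Gamma> C U W = F_form \<Gamma> f W)"

definition fd_subspace :: "((real^'n::finite \<Rightarrow> real) \<times> (real^'n \<Rightarrow> real^'n)) set \<Rightarrow> bool" where
  "fd_subspace V \<longleftrightarrow> (\<exists>(k::nat) b. V = {(\<lambda>x. \<Sum>i<k. c i * fst (b i) x, \<lambda>x. \<Sum>i<k. c i *\<^sub>R snd (b i) x) | c. True})"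

definition fd_fspace :: "('w \<Rightarrow> real) set \<Rightarrow> bool" where
  "fd_fspace W \<longleftrightarrow> (\<exists>(k::nat) b. W = {(\<lambda>\<omega>. \<Sum>i<k. c i * b i \<omega>) | c. True})"

definition trunc_space :: "('w \<Rightarrow> real) \<Rightarrow> real \<Rightarrow> ('w \<Rightarrow> real) set \<Rightarrow> ('w \<Rightarrow> real) set" where
  "trunc_space \<gamma> \<tau> W = (\<lambda>\<phi> \<omega>. indicator {\<omega>. \<gamma> \<omega> \<le> \<tau>} \<omega> * \<phi> \<omega>) ` W"

definition cut_above :: "('w \<Rightarrow> real) \<Rightarrow> real \<Rightarrow> ('n::finite, 'w) field \<Rightarrow> ('n, 'w) field" where
  "cut_above \<gamma> \<tau> U = (\<lambda>x \<omega>. indicator {\<omega>. \<gamma> \<omega> > \<tau>} \<omega> * fst U x \<omega>,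
                        \<lambda>x \<omega>. indicator {\<omega>. \<gamma> \<omega> > \<tau>} \<omega> *\<^sub>R snd U x \<omega>)"

end

theory Submission
  imports Defs "HOL-Probability.Probability"
begin


lemma symm_inner:
  fixes A :: "real^'n::finite^'n"
  assumes "transpose A = A"
  shows "h \<bullet> (A *v k) = k \<bullet> (A *v h)"
proof -
  have "h \<bullet> (A *v k) = (h v* A) \<bullet> k" by (simp add: dot_lmul_matrix)
  also have "h v* A = transpose A *v h" by simp
  finally show ?thesis using assms by (simp add: inner_commute)
qed

lemma qexp:
  fixes A :: "real^'n::finite^'n"
  assumes "transpose A = A"
  shows "(c *\<^sub>R h + f *\<^sub>R k) \<bullet> (A *v (a *\<^sub>R h + b *\<^sub>R k)) =
     a*c*(h \<bullet> (A *v h)) + (a*f + b*c)*(k \<bullet> (A *v h)) + b*f*(k \<bullet> (A *v k))"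
  using symm_inner[OF assms, of h k]
  by (simp add: algebra_simps inner_add_left inner_add_right matrix_vector_right_distrib
      matrix_vector_mult_scaleR)

lemma cont_mv: "continuous_on UNIV (\<lambda>p::(real^'n::finite^'m::finite) \<times> (real^'n). fst p *v snd p)"
  unfolding matrix_vector_mult_def
  by (intro continuous_intros)

lemma meas_mv[measurable (raw)]:
  fixes A :: "'a \<Rightarrow> real^'n::finite^'m::finite"
  assumes "A \<in> borel_measurable M" "f \<in> borel_measurable M"
  shows "(\<lambda>z. A z *v f z) \<in> borel_measurable M"
  by (rule borel_measurable_continuous_Pair[OF assms]) (rule cont_mv)

lemma sumsq_le: "(\<Sum>i\<in>I. f i)\<^sup>2 \<le> real (card I) * (\<Sum>i\<in>I. (f i)\<^sup>2)"
  for f :: "'a \<Rightarrow> real"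
  using sum_squared_le_sum_of_squares[of f I] by (simp add: mult.commute)

lemma normsum_sq_le:
  fixes g :: "'a \<Rightarrow> 'b::real_normed_vector"
  shows "(norm (\<Sum>i\<in>I. g i))\<^sup>2 \<le> real (card I) * (\<Sum>i\<in>I. (norm (g i))\<^sup>2)"
proof -
  have "norm (\<Sum>i\<in>I. g i) \<le> (\<Sum>i\<in>I. norm (g i))" by (rule norm_sum)
  then have "(norm (\<Sum>i\<in>I. g i))\<^sup>2 \<le> (\<Sum>i\<in>I. norm (g i))\<^sup>2"
    by (simp add: power_mono)
  also have "\<dots> \<le> real (card I) * (\<Sum>i\<in>I. (norm (g i))\<^sup>2)" by (rule sumsq_le)
  finally show ?thesis .
qed

definition Qv :: "(real^'n::finite \<Rightarrow> 'w \<Rightarrow> real^'n^'n) \<Rightarrow> (real^'n \<Rightarrow> 'w \<Rightarrow> real^'n) \<Rightarrow>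
   (real^'n \<Rightarrow> 'w \<Rightarrow> real^'n) \<Rightarrow> (real^'n) \<times> 'w \<Rightarrow> real" where
  "Qv C h k z = k (fst z) (snd z) \<bullet> (C (fst z) (snd z) *v h (fst z) (snd z))"

locale PS =
  fixes D :: "(real^'n::finite) set" and G :: "'w measure"
    and C :: "real^'n \<Rightarrow> 'w \<Rightarrow> real^'n^'n" and \<gamma> :: "'w \<Rightarrow> real"
  assumes openD: "open D" and probG: "prob_space G"
    and Cm: "(\<lambda>(x,\<omega>). C x \<omega>) \<in> borel_measurable (lborel \<Otimes>\<^sub>M G)"
    and Cspd: "\<forall>x\<in>D. \<forall>\<omega>. transpose (C x \<omega>) = C x \<omega> \<and> (\<forall>h. h \<noteq> 0 \<longrightarrow> h \<bullet> (C x \<omega> *v h) > 0)"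
    and gm: "\<gamma> \<in> borel_measurable G"
    and ellU: "AE \<omega> in G. AE x in MD D. \<forall>h. h \<bullet> (C x \<omega> *v h) \<le> \<gamma> \<omega> * (norm h)\<^sup>2"
begin

lemma Dsets: "D \<in> sets lborel" using openD by simp

lemma spaceMD[simp]: "space (MD D) = D"
  by (simp add: MD_def space_restrict_space)

lemma sfMD: "sigma_finite_measure (MD D)"
  unfolding MD_def using Dsets
  by (intro sigma_finite_measure_restrict_space) (auto intro: lborel.sigma_finite_measure_axioms)

sublocale G: prob_space G by (rule probG)

sublocale PSF: pair_sigma_finite "MD D" G
  by (intro pair_sigma_finite.intro sfMD G.sigma_finite_measure_axioms)

abbreviation "P \<equiv> MD D \<Otimes>\<^sub>M G"

lemma spaceP: "z \<in> space P \<Longrightarrow> fst z \<in> D"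
  by (auto simp: space_pair_measure)

lemma id_MD: "(\<lambda>x. x) \<in> MD D \<rightarrow>\<^sub>M lborel"
  unfolding MD_def by (rule measurable_restrict_space1) simp

lemma MD_meas: "f \<in> borel_measurable lborel \<Longrightarrow> f \<in> borel_measurable (MD D)"
  unfolding MD_def by (rule measurable_restrict_space1)

lemma idP: "(\<lambda>z. z) \<in> P \<rightarrow>\<^sub>M lborel \<Otimes>\<^sub>M G"
proof -
  have "(\<lambda>z. (fst z, snd z)) \<in> P \<rightarrow>\<^sub>M lborel \<Otimes>\<^sub>M G"
    using id_MD by (intro measurable_Pair) (auto intro: measurable_compose[OF measurable_fst])
  then show ?thesis by simp
qed

lemma toP: "(\<lambda>(x,\<omega>). f x \<omega>) \<in> borel_measurable (lborel \<Otimes>\<^sub>M G) \<Longrightarrow>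
   (\<lambda>z. f (fst z) (snd z)) \<in> borel_measurable P"
proof -
  assume a: "(\<lambda>(x,\<omega>). f x \<omega>) \<in> borel_measurable (lborel \<Otimes>\<^sub>M G)"
  have "(\<lambda>(x,\<omega>). f x \<omega>) \<circ> (\<lambda>z. z) \<in> borel_measurable P"
    by (rule measurable_comp[OF idP a])
  then show ?thesis by (simp add: comp_def case_prod_beta)
qed

lemma iterP:
  fixes f :: "_ \<Rightarrow> _ \<Rightarrow> ennreal"
  assumes "(\<lambda>(x,\<omega>). f x \<omega>) \<in> borel_measurable (lborel \<Otimes>\<^sub>M G)"
  shows "(\<integral>\<^sup>+\<omega>. \<integral>\<^sup>+x. f x \<omega> \<partial>MD D \<partial>G) = (\<integral>\<^sup>+z. f (fst z) (snd z) \<partial>P)"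
  using PSF.nn_integral_snd[of "\<lambda>z. f (fst z) (snd z)"] toP[OF assms] by simp

lemma Qv_meas:
  assumes "(\<lambda>(x,\<omega>). h x \<omega>) \<in> borel_measurable (lborel \<Otimes>\<^sub>M G)"
    "(\<lambda>(x,\<omega>). k x \<omega>) \<in> borel_measurable (lborel \<Otimes>\<^sub>M G)"
  shows "(\<lambda>(x,\<omega>). k x \<omega> \<bullet> (C x \<omega> *v h x \<omega>)) \<in> borel_measurable (lborel \<Otimes>\<^sub>M G)"
proof -
  have "(\<lambda>z. k (fst z) (snd z) \<bullet> (C (fst z) (snd z) *v h (fst z) (snd z))) \<in> borel_measurable (lborel \<Otimes>\<^sub>M G)"
    using assms Cm by (intro borel_measurable_inner meas_mv) (auto simp: case_prod_beta)
  then show ?thesis by (simp add: case_prod_beta)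
qed

lemma QvP_meas:
  assumes "(\<lambda>(x,\<omega>). h x \<omega>) \<in> borel_measurable (lborel \<Otimes>\<^sub>M G)"
    "(\<lambda>(x,\<omega>). k x \<omega>) \<in> borel_measurable (lborel \<Otimes>\<^sub>M G)"
  shows "Qv C h k \<in> borel_measurable P"
  using toP[OF Qv_meas[OF assms]] by (simp add: Qv_def[abs_def])

lemma a_int_iff: "a_integrable D G C U W \<longleftrightarrow> integrable P (Qv C (snd U) (snd W))"
  unfolding a_integrable_def Qv_def by (simp add: case_prod_beta')

lemma a_form_eq: "a_integrable D G C U W \<Longrightarrow> a_form D G C U W = (\<integral>z. Qv C (snd U) (snd W) z \<partial>P)"
  unfolding a_integrable_def a_form_def
  using PSF.integral_snd[of "\<lambda>x \<omega>. snd W x \<omega> \<bullet> (C x \<omega> *v snd U x \<omega>)"]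
  by (simp add: Qv_def case_prod_beta')

lemma normC_eq:
  assumes "(\<lambda>(x,\<omega>). snd U x \<omega>) \<in> borel_measurable (lborel \<Otimes>\<^sub>M G)"
  shows "normCsq D G C U = (\<integral>\<^sup>+z. ennreal (Qv C (snd U) (snd U) z) \<partial>P)"
  unfolding normCsq_def Qv_def
  by (rule iterP[of "\<lambda>x \<omega>. ennreal (snd U x \<omega> \<bullet> (C x \<omega> *v snd U x \<omega>))"])
     (use Qv_meas[OF assms assms] in measurable)

lemma normX_eq:
  assumes "(\<lambda>(x,\<omega>). snd U x \<omega>) \<in> borel_measurable (lborel \<Otimes>\<^sub>M G)"
  shows "normXsq D G U = (\<integral>\<^sup>+z. ennreal ((norm (snd U (fst z) (snd z)))\<^sup>2) \<partial>P)"
  unfolding normXsq_def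
  by (rule iterP[of "\<lambda>x \<omega>. ennreal ((norm (snd U x \<omega>))\<^sup>2)"])
     (use assms in measurable)

lemma Qv_nonneg: "z \<in> space P \<Longrightarrow> 0 \<le> Qv C h h z"
  using Cspd spaceP[of z] unfolding Qv_def
  by (metis order.refl inner_zero_left less_eq_real_def)

lemma Qv_zero: "z \<in> space P \<Longrightarrow> Qv C h h z = 0 \<Longrightarrow> h (fst z) (snd z) = 0"
  using Cspd spaceP[of z] unfolding Qv_def by (metis less_irrefl)

lemma Qv_sym: "z \<in> space P \<Longrightarrow> Qv C h k z = Qv C k h z"
  using Cspd spaceP[of z] unfolding Qv_def by (metis symm_inner)

lemma Qv_lin:
  assumes "z \<in> space P"
  shows "Qv C (\<lambda>x \<omega>. a *\<^sub>R h x \<omega> + b *\<^sub>R k x \<omega>) (\<lambda>x \<omega>. c *\<^sub>R h x \<omega> + f *\<^sub>R k x \<omega>) z =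
     a*c*Qv C h h z + (a*f + b*c)*Qv C h k z + b*f*Qv C k k z"
  using Cspd spaceP[OF assms] unfolding Qv_def by (simp add: qexp)

end



context PS begin

lemma int_finite: "integrable P f \<Longrightarrow> (\<And>z. z \<in> space P \<Longrightarrow> 0 \<le> f z) \<Longrightarrow>
    (\<integral>\<^sup>+z. ennreal (f z) \<partial>P) = ennreal (\<integral>z. f z \<partial>P)"
  by (rule nn_integral_eq_integral) (auto intro: AE_I2)

lemma finite_int: "f \<in> borel_measurable P \<Longrightarrow> (\<And>z. z \<in> space P \<Longrightarrow> 0 \<le> f z) \<Longrightarrow>
    (\<integral>\<^sup>+z. ennreal (f z) \<partial>P) < \<infinity> \<Longrightarrow> integrable P f"
proof -
  assume m: "f \<in> borel_measurable P" and nn: "\<And>z. z \<in> space P \<Longrightarrow> 0 \<le> f z"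
    and fin: "(\<integral>\<^sup>+z. ennreal (f z) \<partial>P) < \<infinity>"
  have "(\<integral>\<^sup>+z. ennreal (norm (f z)) \<partial>P) = (\<integral>\<^sup>+z. ennreal (f z) \<partial>P)"
    using nn by (intro nn_integral_cong) auto
  with m fin show ?thesis by (simp add: integrable_iff_bounded)
qed

lemma pyth_ge:
  assumes me: "(\<lambda>(x,\<omega>). e x \<omega>) \<in> borel_measurable (lborel \<Otimes>\<^sub>M G)"
    and md: "(\<lambda>(x,\<omega>). d x \<omega>) \<in> borel_measurable (lborel \<Otimes>\<^sub>M G)"
    and ie: "integrable P (Qv C e e)" and ied: "integrable P (Qv C e d)"
    and z0: "(\<integral>z. Qv C e d z \<partial>P) = 0"
  shows "(\<integral>\<^sup>+z. ennreal (Qv C e e z) \<partial>P) \<le>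
     (\<integral>\<^sup>+z. ennreal (Qv C (\<lambda>x \<omega>. e x \<omega> + d x \<omega>) (\<lambda>x \<omega>. e x \<omega> + d x \<omega>) z) \<partial>P)"
proof -
  define V where "V = (\<lambda>x \<omega>. e x \<omega> + d x \<omega>)"
  have mV: "(\<lambda>(x,\<omega>). V x \<omega>) \<in> borel_measurable (lborel \<Otimes>\<^sub>M G)"
    unfolding V_def using me md by (simp add: case_prod_beta')
  have eqV: "Qv C V V z = Qv C e e z + 2 * Qv C e d z + Qv C d d z" if "z \<in> space P" for z
    using Qv_lin[OF that, of 1 e 1 d 1 1] by (simp add: V_def)
  have bnd: "Qv C d d z \<le> 2 * Qv C V V z + 2 * Qv C e e z" if z: "z \<in> space P" for z
  proof -
    have "0 \<le> Qv C (\<lambda>x \<omega>. 2 *\<^sub>R e x \<omega> + 1 *\<^sub>R d x \<omega>) (\<lambda>x \<omega>. 2 *\<^sub>R e x \<omega> + 1 *\<^sub>R d x \<omega>) z"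
      by (rule Qv_nonneg[OF z])
    then have "0 \<le> 4 * Qv C e e z + 4 * Qv C e d z + Qv C d d z"
      using Qv_lin[OF z, of 2 e 1 d 2 1] by simp
    then show ?thesis using eqV[OF z] by linarith
  qed
  have mQd: "Qv C d d \<in> borel_measurable P" by (rule QvP_meas[OF md md])
  have mQe: "Qv C e e \<in> borel_measurable P" by (rule QvP_meas[OF me me])
  have mQV: "Qv C V V \<in> borel_measurable P" by (rule QvP_meas[OF mV mV])
  have fe: "(\<integral>\<^sup>+z. ennreal (Qv C e e z) \<partial>P) = ennreal (\<integral>z. Qv C e e z \<partial>P)"
    by (rule int_finite[OF ie Qv_nonneg])
  show ?thesis
  proof (cases "(\<integral>\<^sup>+z. ennreal (Qv C d d z) \<partial>P) = \<infinity>")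
    case True
    have "(\<integral>\<^sup>+z. ennreal (Qv C d d z) \<partial>P) \<le> (\<integral>\<^sup>+z. 2 * ennreal (Qv C V V z) + 2 * ennreal (Qv C e e z) \<partial>P)"
    proof (rule nn_integral_mono)
      fix z assume z: "z \<in> space P"
      have "ennreal (Qv C d d z) \<le> ennreal (2 * Qv C V V z + 2 * Qv C e e z)"
        using bnd[OF z] by (rule ennreal_leI)
      also have "\<dots> = 2 * ennreal (Qv C V V z) + 2 * ennreal (Qv C e e z)"
        using Qv_nonneg[OF z, of V] Qv_nonneg[OF z, of e]
        by (simp add: ennreal_plus ennreal_mult)
      finally show "ennreal (Qv C d d z) \<le> 2 * ennreal (Qv C V V z) + 2 * ennreal (Qv C e e z)" .
    qed
    also have "\<dots> = 2 * (\<integral>\<^sup>+z. ennreal (Qv C V V z) \<partial>P) + 2 * (\<integral>\<^sup>+z. ennreal (Qv C e e z) \<partial>P)"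
      using mQV mQe by (simp add: nn_integral_add nn_integral_cmult)
    finally have "(\<integral>\<^sup>+z. ennreal (Qv C V V z) \<partial>P) = \<infinity>"
      using True fe by (auto simp: ennreal_mult_eq_top_iff top_unique)
    then show ?thesis by (simp add: V_def)
  next
    case False
    have id: "integrable P (Qv C d d)"
      using False by (intro finite_int[OF mQd Qv_nonneg]) (auto simp: less_top)
    have eqi: "(\<integral>z. Qv C V V z \<partial>P) = (\<integral>z. Qv C e e z + 2 * Qv C e d z + Qv C d d z \<partial>P)"
      by (rule Bochner_Integration.integral_cong[OF refl]) (simp add: eqV)
    have iV: "integrable P (Qv C V V)"
    proof -
      have "integrable P (\<lambda>z. Qv C e e z + 2 * Qv C e d z + Qv C d d z)" using ie ied id by simp
      then show ?thesis
        using Bochner_Integration.integrable_cong[OF refl, of P "Qv C V V" "\<lambda>z. Qv C e e z + 2 * Qv C e d z + Qv C d d z"] eqV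
        by simp
    qed
    have "(\<integral>z. Qv C e e z + 2 * Qv C e d z + Qv C d d z \<partial>P) =
        (\<integral>z. Qv C e e z \<partial>P) + 2 * (\<integral>z. Qv C e d z \<partial>P) + (\<integral>z. Qv C d d z \<partial>P)"
      using ie ied id by simp
    moreover have "0 \<le> (\<integral>z. Qv C d d z \<partial>P)"
      by (intro integral_nonneg_AE AE_I2 Qv_nonneg)
    ultimately have "(\<integral>z. Qv C e e z \<partial>P) \<le> (\<integral>z. Qv C V V z \<partial>P)" using z0 eqi by simp
    then have "(\<integral>\<^sup>+z. ennreal (Qv C e e z) \<partial>P) \<le> (\<integral>\<^sup>+z. ennreal (Qv C V V z) \<partial>P)"
      using fe int_finite[OF iV Qv_nonneg] by (simp add: ennreal_leI)
    then show ?thesis by (simp add: V_def)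
  qed
qed

lemma trunc_bound:
  assumes mu: "(\<lambda>(x,\<omega>). u x \<omega>) \<in> borel_measurable (lborel \<Otimes>\<^sub>M G)"
    and mv: "(\<lambda>(x,\<omega>). v x \<omega>) \<in> borel_measurable (lborel \<Otimes>\<^sub>M G)"
    and tau: "0 \<le> \<tau>"
  shows "(\<integral>\<^sup>+\<omega>. \<integral>\<^sup>+x. ennreal ((u x \<omega> - indicator {\<omega>. \<gamma> \<omega> \<le> \<tau>} \<omega> *\<^sub>R v x \<omega>) \<bullet>
              (C x \<omega> *v (u x \<omega> - indicator {\<omega>. \<gamma> \<omega> \<le> \<tau>} \<omega> *\<^sub>R v x \<omega>))) \<partial>MD D \<partial>G)
    \<le> ennreal \<tau> * (\<integral>\<^sup>+\<omega>. \<integral>\<^sup>+x. ennreal ((norm (u x \<omega> - v x \<omega>))\<^sup>2) \<partial>MD D \<partial>G)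
      + (\<integral>\<^sup>+\<omega>. \<integral>\<^sup>+x. ennreal ((indicator {\<omega>. \<gamma> \<omega> > \<tau>} \<omega> *\<^sub>R u x \<omega>) \<bullet>
              (C x \<omega> *v (indicator {\<omega>. \<gamma> \<omega> > \<tau>} \<omega> *\<^sub>R u x \<omega>))) \<partial>MD D \<partial>G)"
  (is "?L \<le> ennreal \<tau> * ?N + ?R")
proof -
  define I where "I = (\<lambda>\<omega>::'w. indicator {\<omega>. \<gamma> \<omega> \<le> \<tau>} \<omega> :: real)"
  define J where "J = (\<lambda>\<omega>::'w. indicator {\<omega>. \<gamma> \<omega> > \<tau>} \<omega> :: real)"
  have mI: "I \<in> borel_measurable G" unfolding I_def using gm by measurable
  have mJ: "J \<in> borel_measurable G" unfolding J_def using gm by measurable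
  have mw: "(\<lambda>(x,\<omega>). u x \<omega> - I \<omega> *\<^sub>R v x \<omega>) \<in> borel_measurable (lborel \<Otimes>\<^sub>M G)"
    using mu mv mI by (simp add: case_prod_beta')
  have mc: "(\<lambda>(x,\<omega>). J \<omega> *\<^sub>R u x \<omega>) \<in> borel_measurable (lborel \<Otimes>\<^sub>M G)"
    using mu mJ by (simp add: case_prod_beta')
  have mn: "(\<lambda>(x,\<omega>). u x \<omega> - v x \<omega>) \<in> borel_measurable (lborel \<Otimes>\<^sub>M G)"
    using mu mv by (simp add: case_prod_beta')
  let ?f = "\<lambda>x \<omega>. ennreal \<tau> * ennreal ((norm (u x \<omega> - v x \<omega>))\<^sup>2) +
     ennreal ((J \<omega> *\<^sub>R u x \<omega>) \<bullet> (C x \<omega> *v (J \<omega> *\<^sub>R u x \<omega>)))"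
  have "?L \<le> (\<integral>\<^sup>+\<omega>. \<integral>\<^sup>+x. ?f x \<omega> \<partial>MD D \<partial>G)"
  proof (rule nn_integral_mono_AE)
    show "AE \<omega> in G. (\<integral>\<^sup>+x. ennreal ((u x \<omega> - indicator {\<omega>. \<gamma> \<omega> \<le> \<tau>} \<omega> *\<^sub>R v x \<omega>) \<bullet>
              (C x \<omega> *v (u x \<omega> - indicator {\<omega>. \<gamma> \<omega> \<le> \<tau>} \<omega> *\<^sub>R v x \<omega>))) \<partial>MD D)
          \<le> (\<integral>\<^sup>+x. ?f x \<omega> \<partial>MD D)"
      using ellU
    proof eventually_elim
      case (elim \<omega>)
      show ?case
      proof (rule nn_integral_mono_AE)
        show "AE x in MD D. ennreal ((u x \<omega> - indicator {\<omega>. \<gamma> \<omega> \<le> \<tau>} \<omega> *\<^sub>R v x \<omega>) \<bullet>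
              (C x \<omega> *v (u x \<omega> - indicator {\<omega>. \<gamma> \<omega> \<le> \<tau>} \<omega> *\<^sub>R v x \<omega>))) \<le> ?f x \<omega>"
          using elim
        proof eventually_elim
          case (elim x)
          show ?case
          proof (cases "\<gamma> \<omega> \<le> \<tau>")
            case True
            have "(u x \<omega> - v x \<omega>) \<bullet> (C x \<omega> *v (u x \<omega> - v x \<omega>)) \<le> \<gamma> \<omega> * (norm (u x \<omega> - v x \<omega>))\<^sup>2"
              using elim by blast
            also have "\<dots> \<le> \<tau> * (norm (u x \<omega> - v x \<omega>))\<^sup>2"
              using True by (intro mult_right_mono) auto
            finally have "ennreal ((u x \<omega> - v x \<omega>) \<bullet> (C x \<omega> *v (u x \<omega> - v x \<omega>))) \<le>
                ennreal \<tau> * ennreal ((norm (u x \<omega> - v x \<omega>))\<^sup>2)"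
              using tau by (simp add: ennreal_leI ennreal_mult[symmetric])
            then show ?thesis using True by (simp add: J_def add_increasing2)
          next
            case False
            then show ?thesis by (simp add: J_def)
          qed
        qed
      qed
    qed
  qed
  also have "\<dots> = (\<integral>\<^sup>+z. ?f (fst z) (snd z) \<partial>P)"
    by (rule iterP) (use mn Qv_meas[OF mc mc] in measurable)
  also have "\<dots> = ennreal \<tau> * (\<integral>\<^sup>+z. ennreal ((norm (u (fst z) (snd z) - v (fst z) (snd z)))\<^sup>2) \<partial>P)
      + (\<integral>\<^sup>+z. ennreal ((J (snd z) *\<^sub>R u (fst z) (snd z)) \<bullet> (C (fst z) (snd z) *v (J (snd z) *\<^sub>R u (fst z) (snd z)))) \<partial>P)"
    using toP[OF mn] toP[OF Qv_meas[OF mc mc]]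
    by (subst nn_integral_add) (auto simp: nn_integral_cmult)
  also have "\<dots> = ennreal \<tau> * ?N + ?R"
  proof -
    have e1: "?N = (\<integral>\<^sup>+z. ennreal ((norm (u (fst z) (snd z) - v (fst z) (snd z)))\<^sup>2) \<partial>P)"
      by (rule iterP) (use mn in measurable)
    have "?R = (\<integral>\<^sup>+\<omega>. \<integral>\<^sup>+x. ennreal ((J \<omega> *\<^sub>R u x \<omega>) \<bullet> (C x \<omega> *v (J \<omega> *\<^sub>R u x \<omega>))) \<partial>MD D \<partial>G)"
      by (simp add: J_def)
    also have "\<dots> = (\<integral>\<^sup>+z. ennreal ((J (snd z) *\<^sub>R u (fst z) (snd z)) \<bullet> (C (fst z) (snd z) *v (J (snd z) *\<^sub>R u (fst z) (snd z)))) \<partial>P)"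
      by (rule iterP) (use Qv_meas[OF mc mc] in measurable)
    finally show ?thesis using e1 by simp
  qed
  finally show ?thesis .
qed

end



lemma Cc_diff: "\<phi> \<in> Cc_inf D \<Longrightarrow> \<phi> differentiable (at x)"
proof -
  assume "\<phi> \<in> Cc_inf D"
  then have "pds [] \<phi> differentiable (at x)" unfolding Cc_inf_def smooth_fun_def by blast
  then show ?thesis by simp
qed

lemma Cc_pd_diff: "\<phi> \<in> Cc_inf D \<Longrightarrow> pd i \<phi> differentiable (at x)"
proof -
  assume "\<phi> \<in> Cc_inf D"
  then have "pds [i] \<phi> differentiable (at x)" unfolding Cc_inf_def smooth_fun_def by blast
  then show ?thesis by simp
qed

lemma Cc_cont: "\<phi> \<in> Cc_inf D \<Longrightarrow> continuous_on UNIV \<phi>"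
  by (meson Cc_diff continuous_at_imp_continuous_on differentiable_imp_continuous_within)

lemma Cc_grad_cont: "\<phi> \<in> Cc_inf D \<Longrightarrow> continuous_on UNIV (grad \<phi>)"
proof -
  assume a: "\<phi> \<in> Cc_inf D"
  have "continuous_on UNIV (pd i \<phi>)" for i
    by (meson Cc_pd_diff[OF a] continuous_at_imp_continuous_on differentiable_imp_continuous_within)
  then show ?thesis unfolding grad_def by (intro continuous_on_vec_lambda) auto
qed

lemma Cc_meas: "\<phi> \<in> Cc_inf D \<Longrightarrow> \<phi> \<in> borel_measurable lborel"
proof - assume a: "\<phi> \<in> Cc_inf D" show ?thesis using borel_measurable_continuous_onI[OF Cc_cont[OF a]] by simp qed

lemma Cc_grad_meas: "\<phi> \<in> Cc_inf D \<Longrightarrow> grad \<phi> \<in> borel_measurable lborel"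
proof - assume a: "\<phi> \<in> Cc_inf D" show ?thesis using borel_measurable_continuous_onI[OF Cc_grad_cont[OF a]] by simp qed

lemma Cc_supp:
  assumes "\<phi> \<in> Cc_inf D"
  obtains K where "compact K" "K \<subseteq> D" "\<And>x. x \<notin> K \<Longrightarrow> \<phi> x = 0" "\<And>x. x \<notin> K \<Longrightarrow> grad \<phi> x = 0"
proof -
  from assms obtain K where K: "compact K" "K \<subseteq> D" "\<And>x. x \<notin> K \<Longrightarrow> \<phi> x = 0"
    unfolding Cc_inf_def by auto
  have "grad \<phi> x = 0" if x: "x \<notin> K" for x
  proof -
    have "open (- K)" using K(1) by (simp add: compact_imp_closed open_Compl)
    have "((\<lambda>_. 0::real) has_derivative (\<lambda>h. 0)) (at x)" by simp
    then have "(\<phi> has_derivative (\<lambda>h. 0)) (at x)"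
      by (rule has_derivative_transform_within_open[OF _ \<open>open (- K)\<close>]) (use x K in auto)
    then have "frechet_derivative \<phi> (at x) = (\<lambda>h. 0)" by (metis frechet_derivative_at)
    then show ?thesis by (simp add: grad_def pd_def vec_eq_iff)
  qed
  with K show ?thesis using that by blast
qed

lemma sq2: "(x+y)\<^sup>2 \<le> 2*x\<^sup>2 + 2*(y::real)\<^sup>2"
proof -
  have "0 \<le> (x-y)\<^sup>2" by simp
  then show ?thesis by (simp add: power2_eq_square algebra_simps)
qed

lemma sq_tri: "(norm (a::'a::real_normed_vector))\<^sup>2 \<le> 2 * (norm (a - b))\<^sup>2 + 2 * (norm b)\<^sup>2"
proof -
  have "norm a \<le> norm (a - b) + norm b" by (metis norm_triangle_sub add.commute)
  then have "(norm a)\<^sup>2 \<le> (norm (a - b) + norm b)\<^sup>2" by (simp add: power_mono)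
  also have "\<dots> \<le> 2 * (norm (a - b))\<^sup>2 + 2 * (norm b)\<^sup>2"
    using sq2[of "norm (a - b)" "norm b"] .
  finally show ?thesis .
qed

lemma MDm: "f \<in> borel_measurable lborel \<Longrightarrow> f \<in> borel_measurable (MD D)"
  unfolding MD_def by (rule measurable_restrict_space1)

lemma Cc_fin:
  assumes "\<phi> \<in> Cc_inf D" "open D"
  shows "(\<integral>\<^sup>+x. ennreal ((\<phi> x)\<^sup>2 + (norm (grad \<phi> x))\<^sup>2) \<partial>MD D) < \<infinity>"
proof -
  obtain K where K: "compact K" "K \<subseteq> D" "\<And>x. x \<notin> K \<Longrightarrow> \<phi> x = 0" "\<And>x. x \<notin> K \<Longrightarrow> grad \<phi> x = 0"
    using Cc_supp[OF assms(1)] by blast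
  define f where "f = (\<lambda>x. (\<phi> x)\<^sup>2 + (norm (grad \<phi> x))\<^sup>2)"
  have cf: "continuous_on UNIV f" unfolding f_def
    using Cc_cont[OF assms(1)] Cc_grad_cont[OF assms(1)] by (intro continuous_intros) auto
  have "compact (f ` K)" using cf K(1) by (meson compact_continuous_image continuous_on_subset subset_UNIV)
  then obtain B where B0: "\<forall>y\<in>f ` K. norm y \<le> B"
    using compact_imp_bounded bounded_iff by metis
  have B: "f x \<le> B" if "x \<in> K" for x using B0 that by force
  have fle: "ennreal (f x) \<le> ennreal B * indicator K x" for x
  proof (cases "x \<in> K")
    case True then show ?thesis using B[OF True] by (simp add: ennreal_leI)
  next
    case False then show ?thesis using K by (simp add: f_def)
  qed
  have KD: "K \<in> sets lborel" using K(1) by (simp add: compact_imp_closed borel_closed)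
  have "(\<integral>\<^sup>+x. ennreal (f x) \<partial>MD D) = (\<integral>\<^sup>+x. ennreal (f x) * indicator D x \<partial>lborel)"
    unfolding MD_def using assms(2) by (intro nn_integral_restrict_space) simp
  also have "\<dots> \<le> (\<integral>\<^sup>+x. ennreal B * indicator K x \<partial>lborel)"
  proof (intro nn_integral_mono)
    fix x show "ennreal (f x) * indicator D x \<le> ennreal B * indicator K x"
      using fle[of x] by (cases "x \<in> D") auto
  qed
  also have "\<dots> = ennreal B * emeasure lborel K" using KD by (simp add: nn_integral_cmult_indicator)
  also have "\<dots> < \<infinity>"
    using emeasure_bounded_finite[OF compact_imp_bounded[OF K(1)]] by (simp add: ennreal_mult_less_top)
  finally show ?thesis by (simp add: f_def)
qed

lemma Cc_gfin:
  assumes "\<phi> \<in> Cc_inf D" "open D"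
  shows "(\<integral>\<^sup>+x. ennreal ((norm (grad \<phi> x))\<^sup>2) \<partial>MD D) < \<infinity>"
proof -
  have "(\<integral>\<^sup>+x. ennreal ((norm (grad \<phi> x))\<^sup>2) \<partial>MD D) \<le> (\<integral>\<^sup>+x. ennreal ((\<phi> x)\<^sup>2 + (norm (grad \<phi> x))\<^sup>2) \<partial>MD D)"
    by (intro nn_integral_mono ennreal_leI) simp
  then show ?thesis using Cc_fin[OF assms] by (simp add: le_less_trans)
qed

lemma Cc_H10: "\<phi> \<in> Cc_inf D \<Longrightarrow> (\<phi>, grad \<phi>) \<in> H10 D"
  unfolding H10_def using Cc_meas Cc_grad_meas
  by (auto intro!: exI[of _ "\<lambda>_. \<phi>"] simp: H1sq_def)

lemma H10_iff: "vg \<in> H10 D \<longleftrightarrow> fst vg \<in> borel_measurable lborel \<and> snd vg \<in> borel_measurable lborel \<and>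
     (\<exists>\<phi>. (\<forall>k. \<phi> k \<in> Cc_inf D) \<and>
        (\<lambda>k. H1sq D (\<lambda>x. \<phi> k x - fst vg x, \<lambda>x. grad (\<phi> k) x - snd vg x)) \<longlonglongrightarrow> 0)"
  by (cases vg) (simp add: H10_def)

lemma H10_gfin:
  assumes "vg \<in> H10 D" "open D"
  shows "(\<integral>\<^sup>+x. ennreal ((norm (snd vg x))\<^sup>2) \<partial>MD D) < \<infinity>"
proof -
  from assms(1) obtain \<theta> where m: "fst vg \<in> borel_measurable lborel" "snd vg \<in> borel_measurable lborel"
    and th: "\<forall>k. \<theta> k \<in> Cc_inf D"
    and lim: "(\<lambda>k. H1sq D (\<lambda>x. \<theta> k x - fst vg x, \<lambda>x. grad (\<theta> k) x - snd vg x)) \<longlonglongrightarrow> 0"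
    unfolding H10_iff by blast
  from order_tendstoD(2)[OF lim, of 1] obtain k where
    k: "H1sq D (\<lambda>x. \<theta> k x - fst vg x, \<lambda>x. grad (\<theta> k) x - snd vg x) < 1"
    by (auto simp: eventually_sequentially)
  let ?g = "grad (\<theta> k)"
  have mg: "?g \<in> borel_measurable lborel" using Cc_grad_meas th by blast
  have "(\<integral>\<^sup>+x. ennreal ((norm (snd vg x))\<^sup>2) \<partial>MD D) \<le>
      (\<integral>\<^sup>+x. 2 * ennreal ((norm (?g x - snd vg x))\<^sup>2) + 2 * ennreal ((norm (?g x))\<^sup>2) \<partial>MD D)"
  proof (intro nn_integral_mono)
    fix x
    have "(norm (snd vg x))\<^sup>2 \<le> 2 * (norm (?g x - snd vg x))\<^sup>2 + 2 * (norm (?g x))\<^sup>2"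
      using sq_tri[of "snd vg x" "?g x"] by (simp add: norm_minus_commute)
    then have "ennreal ((norm (snd vg x))\<^sup>2) \<le> ennreal (2 * (norm (?g x - snd vg x))\<^sup>2 + 2 * (norm (?g x))\<^sup>2)"
      by (rule ennreal_leI)
    then show "ennreal ((norm (snd vg x))\<^sup>2) \<le> 2 * ennreal ((norm (?g x - snd vg x))\<^sup>2) + 2 * ennreal ((norm (?g x))\<^sup>2)"
      by (simp add: ennreal_plus ennreal_mult)
  qed
  also have "\<dots> = 2 * (\<integral>\<^sup>+x. ennreal ((norm (?g x - snd vg x))\<^sup>2) \<partial>MD D) + 2 * (\<integral>\<^sup>+x. ennreal ((norm (?g x))\<^sup>2) \<partial>MD D)"
    using MDm[OF mg] MDm[OF m(2)]
    by (subst nn_integral_add) (auto simp: nn_integral_cmult)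
  also have "\<dots> < \<infinity>"
  proof -
    have "(\<integral>\<^sup>+x. ennreal ((norm (?g x - snd vg x))\<^sup>2) \<partial>MD D) \<le> H1sq D (\<lambda>x. \<theta> k x - fst vg x, \<lambda>x. grad (\<theta> k) x - snd vg x)"
      unfolding H1sq_def by (intro nn_integral_mono ennreal_leI) simp
    note hle = this
    have "(\<integral>\<^sup>+x. ennreal ((norm (?g x - snd vg x))\<^sup>2) \<partial>MD D) < \<infinity>"
    proof -
      have "(\<integral>\<^sup>+x. ennreal ((norm (?g x - snd vg x))\<^sup>2) \<partial>MD D) < 1" by (rule le_less_trans[OF hle k])
      moreover have "(1::ennreal) < \<infinity>" by simp
      ultimately show ?thesis by (rule less_trans)
    qed
    then show ?thesis using Cc_gfin[OF spec[OF th] assms(2)] by (simp add: ennreal_mult_less_top)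
  qed
  finally show ?thesis .
qed




lemma tens_pt:
  fixes g :: "nat \<Rightarrow> 'a::real_normed_vector"
  shows "(\<Sum>i<m. a i * b i)\<^sup>2 + (norm (\<Sum>i<m. b i *\<^sub>R g i))\<^sup>2 \<le>
     (\<Sum>i<m. real m * (b i)\<^sup>2 * ((a i)\<^sup>2 + (norm (g i))\<^sup>2))"
proof -
  have 1: "(\<Sum>i<m. a i * b i)\<^sup>2 \<le> real m * (\<Sum>i<m. (a i * b i)\<^sup>2)"
    using sumsq_le[of "\<lambda>i. a i * b i" "{..<m}"] by simp
  have 2: "(norm (\<Sum>i<m. b i *\<^sub>R g i))\<^sup>2 \<le> real m * (\<Sum>i<m. (norm (b i *\<^sub>R g i))\<^sup>2)"
    using normsum_sq_le[of "\<lambda>i. b i *\<^sub>R g i" "{..<m}"] by simp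
  have 3: "real m * (\<Sum>i<m. (a i * b i)\<^sup>2) + real m * (\<Sum>i<m. (norm (b i *\<^sub>R g i))\<^sup>2) =
      (\<Sum>i<m. real m * (b i)\<^sup>2 * ((a i)\<^sup>2 + (norm (g i))\<^sup>2))"
    by (simp add: sum_distrib_left sum.distrib[symmetric] power_mult_distrib algebra_simps)
  show ?thesis using 1 2 3 by linarith
qed

lemma prodm:
  fixes f g :: "_ \<Rightarrow> real"
  shows "f \<in> borel_measurable lborel \<Longrightarrow> g \<in> borel_measurable M \<Longrightarrow>
    (\<lambda>z. f (fst z) * g (snd z)) \<in> borel_measurable (lborel \<Otimes>\<^sub>M M)"
proof -
  assume f: "f \<in> borel_measurable lborel" and g: "g \<in> borel_measurable M"
  show ?thesis by (rule borel_measurable_times[OF measurable_compose[OF measurable_fst f] measurable_compose[OF measurable_snd g]])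
qed

lemma prodmv:
  fixes f :: "_ \<Rightarrow> 'b::{second_countable_topology,real_normed_vector}"
  shows "f \<in> borel_measurable lborel \<Longrightarrow> g \<in> borel_measurable M \<Longrightarrow>
    (\<lambda>z. g (snd z) *\<^sub>R f (fst z)) \<in> borel_measurable (lborel \<Otimes>\<^sub>M M)"
proof -
  assume f: "f \<in> borel_measurable lborel" and g: "g \<in> borel_measurable M"
  show ?thesis by (rule borel_measurable_scaleR[OF measurable_compose[OF measurable_snd g] measurable_compose[OF measurable_fst f]])
qed

lemma tens_meas:
  assumes "\<forall>i<m. fst (\<phi> i) \<in> borel_measurable lborel" "\<forall>i<m. snd (\<phi> i) \<in> borel_measurable lborel"
    "\<forall>i<m. \<psi> i \<in> borel_measurable M"
  shows "(\<lambda>(x,\<omega>). fst (tens m \<phi> \<psi>) x \<omega>) \<in> borel_measurable (lborel \<Otimes>\<^sub>M M)"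
    and "(\<lambda>(x,\<omega>). snd (tens m \<phi> \<psi>) x \<omega>) \<in> borel_measurable (lborel \<Otimes>\<^sub>M M)"
proof -
  have "(\<lambda>z. \<Sum>i<m. fst (\<phi> i) (fst z) * \<psi> i (snd z)) \<in> borel_measurable (lborel \<Otimes>\<^sub>M M)"
    using assms by (intro borel_measurable_sum prodm) auto
  then show "(\<lambda>(x,\<omega>). fst (tens m \<phi> \<psi>) x \<omega>) \<in> borel_measurable (lborel \<Otimes>\<^sub>M M)"
    by (simp add: tens_def case_prod_beta')
  have "(\<lambda>z. \<Sum>i<m. \<psi> i (snd z) *\<^sub>R snd (\<phi> i) (fst z)) \<in> borel_measurable (lborel \<Otimes>\<^sub>M M)"
    using assms by (intro borel_measurable_sum prodmv) auto
  then show "(\<lambda>(x,\<omega>). snd (tens m \<phi> \<psi>) x \<omega>) \<in> borel_measurable (lborel \<Otimes>\<^sub>M M)"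
    by (simp add: tens_def case_prod_beta')
qed

context PS begin

lemma tens_X:
  assumes ph: "\<forall>i<m. \<phi> i \<in> H10 D" and ps: "\<forall>i<m. \<psi> i \<in> L2 G"
  shows "tens m \<phi> \<psi> \<in> Xspace D G"
proof -
  have mf: "\<forall>i<m. fst (\<phi> i) \<in> borel_measurable lborel" "\<forall>i<m. snd (\<phi> i) \<in> borel_measurable lborel"
    using ph by (auto simp: H10_iff)
  have mps: "\<forall>i<m. \<psi> i \<in> borel_measurable G" using ps by (auto simp: L2_def)
  have "\<forall>i\<in>{..<m}. \<exists>\<theta>. (\<forall>k. \<theta> k \<in> Cc_inf D) \<and>
        (\<lambda>k. H1sq D (\<lambda>x. \<theta> k x - fst (\<phi> i) x, \<lambda>x. grad (\<theta> k) x - snd (\<phi> i) x)) \<longlonglongrightarrow> 0"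
    using ph by (auto simp: H10_iff)
  then obtain \<Theta> where Th: "\<forall>i\<in>{..<m}. (\<forall>k. \<Theta> i k \<in> Cc_inf D) \<and>
        (\<lambda>k. H1sq D (\<lambda>x. \<Theta> i k x - fst (\<phi> i) x, \<lambda>x. grad (\<Theta> i k) x - snd (\<phi> i) x)) \<longlonglongrightarrow> 0"
    by (rule bchoice[elim_format]) blast
  define H where "H i k = H1sq D (\<lambda>x. \<Theta> i k x - fst (\<phi> i) x, \<lambda>x. grad (\<Theta> i k) x - snd (\<phi> i) x)" for i k
  define L where "L i = (\<integral>\<^sup>+\<omega>. ennreal ((\<psi> i \<omega>)\<^sup>2) \<partial>G)" for i
  define S where "S k = tens m (\<lambda>i. (\<Theta> i k, grad (\<Theta> i k))) \<psi>" for k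
  have Sin: "S k \<in> tensor ((\<lambda>\<phi>. (\<phi>, grad \<phi>)) ` Cc_inf D) (L2 G)" for k
    unfolding tensor_def S_def using Th ps by blast
  have bound: "Xfullsq D G (pdiff (tens m \<phi> \<psi>) (S k)) \<le> (\<Sum>i<m. ennreal (real m) * L i * H i k)" for k
  proof -
    define h where "h i x = (\<Theta> i k x - fst (\<phi> i) x)\<^sup>2 + (norm (grad (\<Theta> i k) x - snd (\<phi> i) x))\<^sup>2" for i x
    have mh: "(\<lambda>x. ennreal (h i x)) \<in> borel_measurable (MD D)" if "i < m" for i
    proof -
      have "\<Theta> i k \<in> Cc_inf D" using Th that by auto
      then have [measurable]: "\<Theta> i k \<in> borel_measurable lborel" "grad (\<Theta> i k) \<in> borel_measurable lborel"
        using Cc_meas Cc_grad_meas by auto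
      have [measurable]: "fst (\<phi> i) \<in> borel_measurable lborel" "snd (\<phi> i) \<in> borel_measurable lborel"
        using mf that by auto
      have "(\<lambda>x. ennreal (h i x)) \<in> borel_measurable lborel"
        unfolding h_def by measurable
      then show ?thesis by (rule MDm)
    qed
    have pt: "ennreal ((fst (pdiff (tens m \<phi> \<psi>) (S k)) x \<omega>)\<^sup>2 + (norm (snd (pdiff (tens m \<phi> \<psi>) (S k)) x \<omega>))\<^sup>2)
        \<le> (\<Sum>i<m. ennreal (real m * (\<psi> i \<omega>)\<^sup>2) * ennreal (h i x))" for x \<omega>
    proof -
      have e1: "fst (pdiff (tens m \<phi> \<psi>) (S k)) x \<omega> = (\<Sum>i<m. (fst (\<phi> i) x - \<Theta> i k x) * \<psi> i \<omega>)"
        by (simp add: pdiff_def tens_def S_def sum_subtractf left_diff_distrib)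
      have e2: "snd (pdiff (tens m \<phi> \<psi>) (S k)) x \<omega> = (\<Sum>i<m. \<psi> i \<omega> *\<^sub>R (snd (\<phi> i) x - grad (\<Theta> i k) x))"
        by (simp add: pdiff_def tens_def S_def sum_subtractf scaleR_diff_right)
      have "(fst (pdiff (tens m \<phi> \<psi>) (S k)) x \<omega>)\<^sup>2 + (norm (snd (pdiff (tens m \<phi> \<psi>) (S k)) x \<omega>))\<^sup>2
          \<le> (\<Sum>i<m. real m * (\<psi> i \<omega>)\<^sup>2 * h i x)"
        unfolding e1 e2 h_def
        using tens_pt[of "\<lambda>i. fst (\<phi> i) x - \<Theta> i k x" "\<lambda>i. \<psi> i \<omega>" m "\<lambda>i. snd (\<phi> i) x - grad (\<Theta> i k) x"]
        by (simp add: power2_commute norm_minus_commute)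
      then have "ennreal ((fst (pdiff (tens m \<phi> \<psi>) (S k)) x \<omega>)\<^sup>2 + (norm (snd (pdiff (tens m \<phi> \<psi>) (S k)) x \<omega>))\<^sup>2)
          \<le> ennreal (\<Sum>i<m. real m * (\<psi> i \<omega>)\<^sup>2 * h i x)" by (rule ennreal_leI)
      also have "\<dots> = (\<Sum>i<m. ennreal (real m * (\<psi> i \<omega>)\<^sup>2 * h i x))"
        by (rule sum_ennreal[symmetric]) (simp add: h_def)
      also have "\<dots> = (\<Sum>i<m. ennreal (real m * (\<psi> i \<omega>)\<^sup>2) * ennreal (h i x))"
        by (intro sum.cong refl) (simp add: h_def ennreal_mult)
      finally show ?thesis .
    qed
    have "Xfullsq D G (pdiff (tens m \<phi> \<psi>) (S k)) \<le>
       (\<integral>\<^sup>+\<omega>. \<integral>\<^sup>+x. (\<Sum>i<m. ennreal (real m * (\<psi> i \<omega>)\<^sup>2) * ennreal (h i x)) \<partial>MD D \<partial>G)"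
      unfolding Xfullsq_def by (intro nn_integral_mono pt)
    also have "\<dots> = (\<integral>\<^sup>+\<omega>. (\<Sum>i<m. ennreal (real m * (\<psi> i \<omega>)\<^sup>2) * H i k) \<partial>G)"
    proof (intro nn_integral_cong)
      fix \<omega>
      have "(\<integral>\<^sup>+x. (\<Sum>i<m. ennreal (real m * (\<psi> i \<omega>)\<^sup>2) * ennreal (h i x)) \<partial>MD D)
          = (\<Sum>i<m. \<integral>\<^sup>+x. ennreal (real m * (\<psi> i \<omega>)\<^sup>2) * ennreal (h i x) \<partial>MD D)"
        using mh by (intro nn_integral_sum) auto
      also have "\<dots> = (\<Sum>i<m. ennreal (real m * (\<psi> i \<omega>)\<^sup>2) * H i k)"
        using mh by (intro sum.cong refl) (simp add: nn_integral_cmult H_def H1sq_def h_def)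
      finally show "(\<integral>\<^sup>+x. (\<Sum>i<m. ennreal (real m * (\<psi> i \<omega>)\<^sup>2) * ennreal (h i x)) \<partial>MD D)
          = (\<Sum>i<m. ennreal (real m * (\<psi> i \<omega>)\<^sup>2) * H i k)" .
    qed
    also have "\<dots> = (\<Sum>i<m. (\<integral>\<^sup>+\<omega>. ennreal (real m * (\<psi> i \<omega>)\<^sup>2) \<partial>G) * H i k)"
      using mps by (subst nn_integral_sum) (auto intro!: sum.cong nn_integral_multc)
    also have "\<dots> = (\<Sum>i<m. ennreal (real m) * L i * H i k)"
    proof (intro sum.cong refl)
      fix i assume "i \<in> {..<m}"
      then have [measurable]: "\<psi> i \<in> borel_measurable G" using mps by auto
      have mi: "(\<lambda>\<omega>. ennreal ((\<psi> i \<omega>)\<^sup>2)) \<in> borel_measurable G" by measurable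
      show "(\<integral>\<^sup>+\<omega>. ennreal (real m * (\<psi> i \<omega>)\<^sup>2) \<partial>G) * H i k = ennreal (real m) * L i * H i k"
        by (simp add: L_def ennreal_mult nn_integral_cmult[OF mi])
    qed
    finally show ?thesis .
  qed
  have lim: "(\<lambda>k. \<Sum>i<m. ennreal (real m) * L i * H i k) \<longlonglongrightarrow> (\<Sum>i<m. ennreal (real m) * L i * 0)"
  proof (intro tendsto_sum ennreal_tendsto_cmult)
    fix i assume "i \<in> {..<m}"
    then show "ennreal (real m) * L i < top" using ps
      by (auto simp: L_def L2_def ennreal_mult_less_top)
    show "(\<lambda>k. H i k) \<longlonglongrightarrow> 0" using Th \<open>i \<in> {..<m}\<close> by (simp add: H_def)
  qed
  then have lim0: "(\<lambda>k. \<Sum>i<m. ennreal (real m) * L i * H i k) \<longlonglongrightarrow> 0" by simp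
  have "(\<lambda>k. Xfullsq D G (pdiff (tens m \<phi> \<psi>) (S k))) \<longlonglongrightarrow> 0"
    by (rule tendsto_sandwich[OF _ _ tendsto_const lim0]) (use bound in auto)
  moreover have "(\<lambda>(x,\<omega>). fst (tens m \<phi> \<psi>) x \<omega>) \<in> borel_measurable (lborel \<Otimes>\<^sub>M G)"
    "(\<lambda>(x,\<omega>). snd (tens m \<phi> \<psi>) x \<omega>) \<in> borel_measurable (lborel \<Otimes>\<^sub>M G)"
    using tens_meas[OF mf mps] by auto
  ultimately show ?thesis unfolding Xspace_def using Sin by blast
qed

end



lemma inf_bound:
  fixes g :: "'a \<Rightarrow> ennreal"
  assumes H: "\<forall>v\<in>T. X \<le> ennreal \<tau> * g v + R" and tau: "\<tau> > 0"
  shows "X \<le> ennreal \<tau> * (INF v\<in>T. g v) + R"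
proof (rule ennreal_le_epsilon)
  fix e :: real assume fin: "ennreal \<tau> * (INF v\<in>T. g v) + R < top" and e: "0 < e"
  have ninf: "(INF v\<in>T. g v) \<noteq> \<infinity>"
  proof
    assume "(INF v\<in>T. g v) = \<infinity>"
    then have "ennreal \<tau> * (INF v\<in>T. g v) = \<infinity>" using tau by (simp add: ennreal_mult_eq_top_iff)
    then show False using fin by simp
  qed
  have "e / \<tau> > 0" using e tau by simp
  from INF_approx_ennreal[OF this refl ninf] obtain v where v: "v \<in> T" "g v < (INF v\<in>T. g v) + ennreal (e / \<tau>)"
    by blast
  have "X \<le> ennreal \<tau> * g v + R" using H v(1) by blast
  also have "\<dots> \<le> ennreal \<tau> * ((INF v\<in>T. g v) + ennreal (e / \<tau>)) + R"
    using v(2) by (intro add_mono mult_left_mono) auto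
  also have "\<dots> = ennreal \<tau> * (INF v\<in>T. g v) + R + ennreal \<tau> * ennreal (e / \<tau>)"
    by (simp add: distrib_left ac_simps)
  also have "ennreal \<tau> * ennreal (e / \<tau>) = ennreal e"
    using tau e by (simp add: ennreal_mult[symmetric])
  finally show "X \<le> ennreal \<tau> * (INF v\<in>T. g v) + R + ennreal e" .
qed

lemma Qv_diff1: "Qv C (\<lambda>x \<omega>. h1 x \<omega> - h2 x \<omega>) k z = Qv C h1 k z - Qv C h2 k z"
  by (simp add: Qv_def matrix_vector_mult_diff_distrib inner_diff_right)

lemma Qv_diff2: "Qv C h (\<lambda>x \<omega>. k1 x \<omega> - k2 x \<omega>) z = Qv C h k1 z - Qv C h k2 z"
  by (simp add: Qv_def inner_diff_left)

definition ttens :: "('w \<Rightarrow> real) \<Rightarrow> real \<Rightarrow> ('n::finite, 'w) field \<Rightarrow> ('n, 'w) field" where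
  "ttens \<gamma> \<tau> U = (\<lambda>x \<omega>. indicator {\<omega>. \<gamma> \<omega> \<le> \<tau>} \<omega> * fst U x \<omega>, \<lambda>x \<omega>. indicator {\<omega>. \<gamma> \<omega> \<le> \<tau>} \<omega> *\<^sub>R snd U x \<omega>)"

lemma ttens_tens: "ttens \<gamma> \<tau> (tens m \<phi> \<psi>) = tens m \<phi> (\<lambda>i \<omega>. indicator {\<omega>. \<gamma> \<omega> \<le> \<tau>} \<omega> * \<psi> i \<omega>)"
  by (simp add: ttens_def tens_def sum_distrib_left scaleR_sum_right algebra_simps)

context PS begin

lemma trunc_L2: "c \<in> L2 G \<Longrightarrow> (\<lambda>\<omega>. indicator {\<omega>. \<gamma> \<omega> \<le> \<tau>} \<omega> * c \<omega>) \<in> L2 G"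
proof -
  assume c: "c \<in> L2 G"
  then have [measurable]: "c \<in> borel_measurable G" by (simp add: L2_def)
  note gm[measurable]
  have "(\<integral>\<^sup>+\<omega>. ennreal ((indicator {\<omega>. \<gamma> \<omega> \<le> \<tau>} \<omega> * c \<omega>)\<^sup>2) \<partial>G) \<le> (\<integral>\<^sup>+\<omega>. ennreal ((c \<omega>)\<^sup>2) \<partial>G)"
    by (intro nn_integral_mono ennreal_leI) (simp add: indicator_def)
  then show ?thesis using c unfolding L2_def by (auto simp: le_less_trans)
qed

lemma X_meas: "U \<in> Xspace D G \<Longrightarrow> (\<lambda>(x,\<omega>). snd U x \<omega>) \<in> borel_measurable (lborel \<Otimes>\<^sub>M G)"
  by (simp add: Xspace_def)

lemma tensor_X:
  assumes "V' \<subseteq> H10 D" "W' \<subseteq> L2 G" "w \<in> tensor V' W'"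
  shows "w \<in> Xspace D G"
  using assms unfolding tensor_def by (auto intro!: tens_X)

lemma ttensor_X:
  assumes "V' \<subseteq> H10 D" "W' \<subseteq> L2 G" "w \<in> tensor V' (trunc_space \<gamma> \<tau> W')"
  shows "w \<in> Xspace D G"
proof (rule tensor_X[OF assms(1) _ assms(3)])
  show "trunc_space \<gamma> \<tau> W' \<subseteq> L2 G" using assms(2) trunc_L2 by (auto simp: trunc_space_def)
qed

lemma ttens_in:
  assumes "v \<in> tensor V' W'"
  shows "ttens \<gamma> \<tau> v \<in> tensor V' (trunc_space \<gamma> \<tau> W')"
proof -
  from assms obtain m \<phi> \<psi> where v: "v = tens m \<phi> \<psi>" "\<forall>i<m. \<phi> i \<in> V'" "\<forall>i<m. \<psi> i \<in> W'"
    unfolding tensor_def by blast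
  show ?thesis unfolding v ttens_tens tensor_def trunc_space_def using v by blast
qed

lemma part1:
  assumes V: "V' \<subseteq> H10 D" and W: "W' \<subseteq> L2 G"
    and u: "galerkin_sol D G C f (Xspace D G) u" and tau: "\<tau> > 0"
    and uN: "galerkin_sol D G C f (tensor V' (trunc_space \<gamma> \<tau> W')) uN"
  shows "normCsq D G C (pdiff u uN) \<le> ennreal \<tau> * (INF v\<in>tensor V' W'. normXsq D G (pdiff u v))
      + normCsq D G C (cut_above \<gamma> \<tau> u)"
proof (rule inf_bound[OF _ tau], rule ballI)
  let ?S = "tensor V' (trunc_space \<gamma> \<tau> W')"
  fix v assume v: "v \<in> tensor V' W'"
  define w where "w = ttens \<gamma> \<tau> v"
  have wS: "w \<in> ?S" unfolding w_def by (rule ttens_in[OF v])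
  have uX: "u \<in> Xspace D G" and au: "\<forall>W\<in>Xspace D G. a_integrable D G C u W \<and> a_form D G C u W = F_form G f W"
    using u by (auto simp: galerkin_sol_def)
  have uNS: "uN \<in> ?S" and auN: "\<forall>W\<in>?S. a_integrable D G C uN W \<and> a_form D G C uN W = F_form G f W"
    using uN by (auto simp: galerkin_sol_def)
  have SX: "W \<in> ?S \<Longrightarrow> W \<in> Xspace D G" for W by (rule ttensor_X[OF V W])
  have uNX: "uN \<in> Xspace D G" using SX uNS by blast
  have wX: "w \<in> Xspace D G" using SX wS by blast
  have vX: "v \<in> Xspace D G" by (rule tensor_X[OF V W v])
  define su where "su = snd u"
  define sN where "sN = snd uN"
  define sw where "sw = snd w"
  have mu: "(\<lambda>(x,\<omega>). su x \<omega>) \<in> borel_measurable (lborel \<Otimes>\<^sub>M G)" using X_meas[OF uX] by (simp add: su_def)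
  have mN: "(\<lambda>(x,\<omega>). sN x \<omega>) \<in> borel_measurable (lborel \<Otimes>\<^sub>M G)" using X_meas[OF uNX] by (simp add: sN_def)
  have mw: "(\<lambda>(x,\<omega>). sw x \<omega>) \<in> borel_measurable (lborel \<Otimes>\<^sub>M G)" using X_meas[OF wX] by (simp add: sw_def)
  have mv: "(\<lambda>(x,\<omega>). snd v x \<omega>) \<in> borel_measurable (lborel \<Otimes>\<^sub>M G)" using X_meas[OF vX] .
  define e where "e = (\<lambda>x \<omega>. su x \<omega> - sN x \<omega>)"
  define d where "d = (\<lambda>x \<omega>. sN x \<omega> - sw x \<omega>)"
  have me: "(\<lambda>(x,\<omega>). e x \<omega>) \<in> borel_measurable (lborel \<Otimes>\<^sub>M G)"
    using mu mN by (simp add: e_def case_prod_beta')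
  have md: "(\<lambda>(x,\<omega>). d x \<omega>) \<in> borel_measurable (lborel \<Otimes>\<^sub>M G)"
    using mN mw by (simp add: d_def case_prod_beta')
  have i_uu: "integrable P (Qv C su su)" using au uX by (auto simp: a_int_iff su_def)
  have i_uN: "integrable P (Qv C su sN)" using au uNX by (auto simp: a_int_iff su_def sN_def)
  have i_NN: "integrable P (Qv C sN sN)" using auN uNS by (auto simp: a_int_iff sN_def)
  have i_uw: "integrable P (Qv C su sw)" using au wX by (auto simp: a_int_iff su_def sw_def)
  have i_Nw: "integrable P (Qv C sN sw)" using auN wS by (auto simp: a_int_iff sN_def sw_def)
  have i_Nu: "integrable P (Qv C sN su)"
    using i_uN Bochner_Integration.integrable_cong[OF refl, of P "Qv C sN su" "Qv C su sN"] Qv_sym by auto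
  have eqee: "Qv C e e z = (Qv C su su z - Qv C su sN z) - (Qv C sN su z - Qv C sN sN z)" for z
    unfolding e_def Qv_diff1 Qv_diff2 by simp
  have eqed: "Qv C e d z = (Qv C su sN z - Qv C sN sN z) - (Qv C su sw z - Qv C sN sw z)" for z
    unfolding e_def d_def Qv_diff1 Qv_diff2 by simp
  have ie: "integrable P (Qv C e e)" unfolding eqee[abs_def] using i_uu i_uN i_Nu i_NN by simp
  have ied: "integrable P (Qv C e d)" unfolding eqed[abs_def] using i_uN i_NN i_uw i_Nw by simp
  have z0: "(\<integral>z. Qv C e d z \<partial>P) = 0"
  proof -
    have "(\<integral>z. Qv C e d z \<partial>P) = (a_form D G C u uN - a_form D G C uN uN) - (a_form D G C u w - a_form D G C uN w)"
      unfolding eqed[abs_def] using i_uN i_NN i_uw i_Nw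
      by (simp add: a_form_eq a_int_iff su_def sN_def sw_def)
    also have "\<dots> = 0" using au auN uNX wX uNS wS by simp
    finally show ?thesis .
  qed
  have "normCsq D G C (pdiff u uN) = (\<integral>\<^sup>+z. ennreal (Qv C e e z) \<partial>P)"
    by (subst normC_eq) (use me in \<open>simp_all add: e_def su_def sN_def pdiff_def\<close>)
  also have "\<dots> \<le> (\<integral>\<^sup>+z. ennreal (Qv C (\<lambda>x \<omega>. e x \<omega> + d x \<omega>) (\<lambda>x \<omega>. e x \<omega> + d x \<omega>) z) \<partial>P)"
    by (rule pyth_ge[OF me md ie ied z0])
  also have "(\<lambda>x \<omega>. e x \<omega> + d x \<omega>) = snd (pdiff u w)"
    by (simp add: e_def d_def pdiff_def su_def sw_def)
  also have "(\<integral>\<^sup>+z. ennreal (Qv C (snd (pdiff u w)) (snd (pdiff u w)) z) \<partial>P) = normCsq D G C (pdiff u w)"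
    by (subst normC_eq) (use mu mw in \<open>simp_all add: su_def sw_def pdiff_def case_prod_beta'\<close>)
  also have "\<dots> \<le> ennreal \<tau> * normXsq D G (pdiff u v) + normCsq D G C (cut_above \<gamma> \<tau> u)"
    using trunc_bound[of "snd u" "snd v" \<tau>] mu mv tau
    by (simp add: normCsq_def normXsq_def pdiff_def w_def ttens_def cut_above_def su_def)
  finally show "normCsq D G C (pdiff u uN) \<le> ennreal \<tau> * normXsq D G (pdiff u v) + normCsq D G C (cut_above \<gamma> \<tau> u)" .
qed

end



lemma sum_mult_pull: "(\<Sum>m\<in>A. c * f m * g m) = (c::real) * (\<Sum>m\<in>A. f m * g m)"
  by (simp add: sum_distrib_left mult.assoc)

lemma Qins_upd:
  fixes G :: "'i \<Rightarrow> 'i \<Rightarrow> real"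
  assumes "finite J" "N \<notin> J"
  shows "(\<Sum>n\<in>insert N J. \<Sum>m\<in>insert N J. (a(N:=t)) n * (a(N:=t)) m * G n m) =
     t*t*G N N + t * (\<Sum>m\<in>J. a m * G N m) + t * (\<Sum>n\<in>J. a n * G n N) + (\<Sum>n\<in>J. \<Sum>m\<in>J. a n * a m * G n m)"
proof -
  have e1: "(\<Sum>m\<in>J. (a(N:=t)) m * G N m) = (\<Sum>m\<in>J. a m * G N m)"
    using assms by (intro sum.cong) auto
  have e2: "(\<Sum>n\<in>J. (a(N:=t)) n * (\<Sum>m\<in>insert N J. (a(N:=t)) m * G n m)) =
      (\<Sum>n\<in>J. a n * (t * G n N)) + (\<Sum>n\<in>J. \<Sum>m\<in>J. a n * a m * G n m)"
  proof -
    have "(\<Sum>n\<in>J. (a(N:=t)) n * (\<Sum>m\<in>insert N J. (a(N:=t)) m * G n m)) =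
        (\<Sum>n\<in>J. a n * (t * G n N) + (\<Sum>m\<in>J. a n * a m * G n m))"
    proof (intro sum.cong refl)
      fix n assume n: "n \<in> J"
      have "(\<Sum>m\<in>J. (a(N:=t)) m * G n m) = (\<Sum>m\<in>J. a m * G n m)"
        using assms by (intro sum.cong) auto
      then show "(a(N:=t)) n * (\<Sum>m\<in>insert N J. (a(N:=t)) m * G n m) = a n * (t * G n N) + (\<Sum>m\<in>J. a n * a m * G n m)"
      proof -
        have nN: "n \<noteq> N" using assms n by auto
        have "(a(N:=t)) n * (\<Sum>m\<in>insert N J. (a(N:=t)) m * G n m) = a n * (t * G n N + (\<Sum>m\<in>J. a m * G n m))"
          using assms nN \<open>(\<Sum>m\<in>J. (a(N:=t)) m * G n m) = (\<Sum>m\<in>J. a m * G n m)\<close> by simp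
        also have "\<dots> = a n * (t * G n N) + (\<Sum>m\<in>J. a n * a m * G n m)"
          by (simp add: distrib_left sum_mult_pull)
        finally show ?thesis .
      qed
    qed
    then show ?thesis by (simp add: sum.distrib)
  qed
  have "(\<Sum>n\<in>insert N J. \<Sum>m\<in>insert N J. (a(N:=t)) n * (a(N:=t)) m * G n m) =
      (\<Sum>n\<in>insert N J. (a(N:=t)) n * (\<Sum>m\<in>insert N J. (a(N:=t)) m * G n m))"
    by (intro sum.cong refl) (rule sum_mult_pull)
  also have "\<dots> = t * (t * G N N + (\<Sum>m\<in>J. a m * G N m)) +
      ((\<Sum>n\<in>J. a n * (t * G n N)) + (\<Sum>n\<in>J. \<Sum>m\<in>J. a n * a m * G n m))"
    using assms e1 e2 by simp
  also have "\<dots> = t*t*G N N + t * (\<Sum>m\<in>J. a m * G N m) + t * (\<Sum>n\<in>J. a n * G n N) + (\<Sum>n\<in>J. \<Sum>m\<in>J. a n * a m * G n m)"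
    by (simp add: sum_distrib_left algebra_simps)
  finally show ?thesis .
qed

lemma quad_zero:
  fixes gg ss :: real
  assumes g: "0 \<le> gg" and H: "\<And>tt. 0 \<le> tt*tt*gg + 2*tt * ss"
  shows "ss = 0"
proof (rule ccontr)
  assume s: "ss \<noteq> 0"
  define w where "w = gg + 1"
  have w: "w > 0" using g by (simp add: w_def)
  define t0 where "t0 = - ss / w"
  have tw: "t0 * w = - ss" using w by (simp add: t0_def)
  have "0 \<le> t0*t0*gg + 2*t0 * ss" by (rule H)
  then have "0 \<le> (t0*t0*gg + 2*t0 * ss) * (w*w)" using w by simp
  also have "(t0*t0*gg + 2*t0 * ss) * (w*w) = (t0*w)*(t0*w)*gg + 2*(t0*w) * ss*w" by (simp add: algebra_simps)
  also have "\<dots> = ss * ss*gg - 2 * ss * ss*w" by (simp add: tw)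
  also have "\<dots> = - ((ss * ss) * (gg + 2))" by (simp add: w_def algebra_simps)
  finally have "0 \<le> - ((ss * ss) * (gg + 2))" .
  moreover have "ss * ss > 0" using s not_real_square_gt_zero by blast
  moreover have "(ss * ss) * (gg + 2) > 0" by (rule mult_pos_pos[OF \<open>ss * ss > 0\<close>]) (use g in simp)
  ultimately show False by linarith
qed

lemma linsolve:
  fixes G :: "'i \<Rightarrow> 'i \<Rightarrow> real"
  assumes fin: "finite I" and sym: "\<forall>n m. G n m = G m n"
  shows "\<forall>F. (\<forall>a. 0 \<le> (\<Sum>n\<in>I. \<Sum>m\<in>I. a n * a m * G n m)) \<longrightarrow>
     (\<forall>a. (\<Sum>n\<in>I. \<Sum>m\<in>I. a n * a m * G n m) = 0 \<longrightarrow> (\<Sum>m\<in>I. a m * F m) = 0) \<longrightarrow>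
     (\<exists>a. \<forall>m\<in>I. (\<Sum>n\<in>I. a n * G n m) = F m)"
  using fin
proof (induction I rule: finite_induct)
  case empty
  then show ?case by simp
next
  case (insert N J)
  let ?I = "insert N J"
  show ?case
  proof (intro allI impI)
    fix F :: "'i \<Rightarrow> real"
    assume psd: "\<forall>a. 0 \<le> (\<Sum>n\<in>?I. \<Sum>m\<in>?I. a n * a m * G n m)"
      and null: "\<forall>a. (\<Sum>n\<in>?I. \<Sum>m\<in>?I. a n * a m * G n m) = 0 \<longrightarrow> (\<Sum>m\<in>?I. a m * F m) = 0"
    have QJ: "(\<Sum>n\<in>?I. \<Sum>m\<in>?I. (a(N:=0)) n * (a(N:=0)) m * G n m) = (\<Sum>n\<in>J. \<Sum>m\<in>J. a n * a m * G n m)" for a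
      using Qins_upd[OF insert(1,2), of a 0 G] by simp
    have LJ: "(\<Sum>m\<in>?I. (a(N:=0)) m * F' m) = (\<Sum>m\<in>J. a m * F' m)" for a and F' :: "'i \<Rightarrow> real"
    proof -
      have "(\<Sum>m\<in>J. (a(N:=0)) m * F' m) = (\<Sum>m\<in>J. a m * F' m)" using insert(2) by (intro sum.cong) auto
      then show ?thesis using insert(1,2) by simp
    qed
    have psdJ: "\<forall>a. 0 \<le> (\<Sum>n\<in>J. \<Sum>m\<in>J. a n * a m * G n m)"
    proof (intro allI)
      fix a show "0 \<le> (\<Sum>n\<in>J. \<Sum>m\<in>J. a n * a m * G n m)" using spec[OF psd, of "a(N:=0)"] QJ[of a] by simp
    qed
    have nullJ: "\<forall>a. (\<Sum>n\<in>J. \<Sum>m\<in>J. a n * a m * G n m) = 0 \<longrightarrow> (\<Sum>m\<in>J. a m * F m) = 0"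
    proof (intro allI impI)
      fix a assume "(\<Sum>n\<in>J. \<Sum>m\<in>J. a n * a m * G n m) = 0"
      then have "(\<Sum>m\<in>?I. (a(N:=0)) m * F m) = 0" using spec[OF null, of "a(N:=0)"] QJ[of a] by simp
      then show "(\<Sum>m\<in>J. a m * F m) = 0" using LJ[of a F] by simp
    qed
    obtain x where x: "\<forall>m\<in>J. (\<Sum>n\<in>J. x n * G n m) = F m"
      using insert(3) psdJ nullJ by blast
    have gNN: "0 \<le> G N N"
    proof -
      have "0 \<le> (\<Sum>n\<in>?I. \<Sum>m\<in>?I. ((\<lambda>_. 0)(N:=1)) n * ((\<lambda>_. 0)(N:=1)) m * G n m)" using psd by blast
      then show ?thesis using Qins_upd[OF insert(1,2), of "\<lambda>_. 0" 1 G] by simp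
    qed
    have nullW: "\<forall>a. (\<Sum>n\<in>J. \<Sum>m\<in>J. a n * a m * G n m) = 0 \<longrightarrow> (\<Sum>m\<in>J. a m * G N m) = 0"
    proof (intro allI impI)
      fix a assume q0: "(\<Sum>n\<in>J. \<Sum>m\<in>J. a n * a m * G n m) = 0"
      define s where "s = (\<Sum>m\<in>J. a m * G N m)"
      have "(\<Sum>n\<in>J. a n * G n N) = s" unfolding s_def using sym by (intro sum.cong) auto
      have "0 \<le> tt*tt*G N N + 2*tt * s" for tt
      proof -
        have "0 \<le> (\<Sum>n\<in>?I. \<Sum>m\<in>?I. (a(N:=tt)) n * (a(N:=tt)) m * G n m)" using psd by blast
        then show ?thesis using Qins_upd[OF insert(1,2), of a tt G] q0 \<open>(\<Sum>n\<in>J. a n * G n N) = s\<close>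
          unfolding s_def by simp
      qed
      then show "s = 0" by (rule quad_zero[OF gNN])
    qed
    obtain y where y: "\<forall>m\<in>J. (\<Sum>n\<in>J. y n * G n m) = G N m"
      using insert(3) psdJ nullW by blast
    define z where "z = (\<lambda>n. if n = N then 1 else - y n)"
    have zJ: "(\<Sum>n\<in>?I. z n * G n m) = 0" if m: "m \<in> J" for m
    proof -
      have "(\<Sum>n\<in>J. z n * G n m) = - (\<Sum>n\<in>J. y n * G n m)"
        using insert(2) by (simp add: z_def sum_negf[symmetric], intro sum.cong) auto
      then show ?thesis using insert(1,2) y m by (simp add: z_def)
    qed
    define \<kappa> where "\<kappa> = (\<Sum>n\<in>?I. z n * G n N)"
    have Qz: "(\<Sum>n\<in>?I. \<Sum>m\<in>?I. z n * z m * G n m) = \<kappa>"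
    proof -
      have "(\<Sum>n\<in>?I. \<Sum>m\<in>?I. z n * z m * G n m) = (\<Sum>m\<in>?I. z m * (\<Sum>n\<in>?I. z n * G n m))"
        by (subst sum.swap) (simp add: sum_distrib_left algebra_simps)
      also have "\<dots> = z N * (\<Sum>n\<in>?I. z n * G n N) + (\<Sum>m\<in>J. z m * (\<Sum>n\<in>?I. z n * G n m))"
        using insert(1,2) by simp
      also have "(\<Sum>m\<in>J. z m * (\<Sum>n\<in>?I. z n * G n m)) = 0" using zJ by simp
      finally show ?thesis by (simp add: z_def \<kappa>_def)
    qed
    have k0: "0 \<le> \<kappa>" using spec[OF psd, of z] Qz by simp
    define x' where "x' = x(N:=0)"
    have x'J: "(\<Sum>n\<in>?I. x' n * G n m) = (\<Sum>n\<in>J. x n * G n m)" for m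
      unfolding x'_def using LJ[of x "\<lambda>n. G n m"] by simp
    show "\<exists>a. \<forall>m\<in>?I. (\<Sum>n\<in>?I. a n * G n m) = F m"
    proof (cases "\<kappa> = 0")
      case False
      then have kp: "\<kappa> > 0" using k0 by simp
      define r where "r = F N - (\<Sum>n\<in>J. x n * G n N)"
      define a where "a = (\<lambda>n. x' n + (r/\<kappa>) * z n)"
      have "(\<Sum>n\<in>?I. a n * G n m) = (\<Sum>n\<in>J. x n * G n m) + (r/\<kappa>) * (\<Sum>n\<in>?I. z n * G n m)" for m
        unfolding a_def x'J[symmetric] by (simp add: distrib_right sum.distrib sum_distrib_left mult.assoc)
      then have "\<forall>m\<in>?I. (\<Sum>n\<in>?I. a n * G n m) = F m"
        using x zJ kp by (auto simp: \<kappa>_def[symmetric] r_def)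
      then show ?thesis by blast
    next
      case True
      then have "(\<Sum>m\<in>?I. z m * F m) = 0" using spec[OF null, of z] Qz by simp
      then have FN: "F N = (\<Sum>m\<in>J. y m * F m)"
        using insert(1,2) by (simp add: z_def, subst (asm) sum.cong[OF refl, of _ _ "\<lambda>m. - (y m * F m)"])
          (auto simp: sum_negf)
      have "(\<Sum>m\<in>J. y m * F m) = (\<Sum>m\<in>J. y m * (\<Sum>n\<in>J. x n * G n m))" using x by simp
      also have "\<dots> = (\<Sum>n\<in>J. x n * (\<Sum>m\<in>J. y m * G m n))"
        using sym by (simp add: sum_distrib_left algebra_simps, subst sum.swap) simp
      also have "\<dots> = (\<Sum>n\<in>J. x n * G N n)" using y by simp
      also have "\<dots> = (\<Sum>n\<in>J. x n * G n N)" using sym by simp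
      finally have "\<forall>m\<in>?I. (\<Sum>n\<in>?I. x' n * G n m) = F m" using x FN x'J by auto
      then show ?thesis by blast
    qed
  qed
qed




lemma mv_sum: "A *v (\<Sum>n\<in>I. v n) = (\<Sum>n\<in>I. A *v v n)"
  by (induction I rule: infinite_finite_induct) (auto simp: matrix_vector_right_distrib)

lemma Qv_sum:
  "Qv C (\<lambda>x \<omega>. \<Sum>n\<in>I. a n *\<^sub>R h n x \<omega>) (\<lambda>x \<omega>. \<Sum>m\<in>J. d m *\<^sub>R k m x \<omega>) z =
     (\<Sum>m\<in>J. \<Sum>n\<in>I. d m * a n * Qv C (h n) (k m) z)"
proof -
  have "Qv C (\<lambda>x \<omega>. \<Sum>n\<in>I. a n *\<^sub>R h n x \<omega>) (\<lambda>x \<omega>. \<Sum>m\<in>J. d m *\<^sub>R k m x \<omega>) z =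
     (\<Sum>n\<in>I. \<Sum>m\<in>J. d m * a n * Qv C (h n) (k m) z)"
    by (simp add: Qv_def inner_sum_left inner_sum_right mv_sum matrix_vector_mult_scaleR sum_distrib_left algebra_simps)
  also have "\<dots> = (\<Sum>m\<in>J. \<Sum>n\<in>I. d m * a n * Qv C (h n) (k m) z)" by (rule sum.swap)
  finally show ?thesis .
qed

lemma Qv_sum2:
  "Qv C h (\<lambda>x \<omega>. \<Sum>m\<in>J. d m *\<^sub>R k m x \<omega>) z = (\<Sum>m\<in>J. d m * Qv C h (k m) z)"
  by (simp add: Qv_def inner_sum_left)

context PS begin

lemma polar:
  assumes x: "x \<in> D"
  shows "\<bar>k \<bullet> (C x \<omega> *v h)\<bar> \<le> (h \<bullet> (C x \<omega> *v h) + k \<bullet> (C x \<omega> *v k)) / 2"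
proof -
  have s: "transpose (C x \<omega>) = C x \<omega>" and p: "\<And>v. 0 \<le> v \<bullet> (C x \<omega> *v v)"
    using Cspd x by (auto, metis inner_zero_left matrix_vector_mult_0_right order.refl less_eq_real_def)
  have 1: "0 \<le> (1 *\<^sub>R h + 1 *\<^sub>R k) \<bullet> (C x \<omega> *v (1 *\<^sub>R h + 1 *\<^sub>R k))" by (rule p)
  have 2: "0 \<le> (1 *\<^sub>R h + (-1) *\<^sub>R k) \<bullet> (C x \<omega> *v (1 *\<^sub>R h + (-1) *\<^sub>R k))" by (rule p)
  show ?thesis using 1 2 unfolding qexp[OF s] by (simp add: abs_le_iff)
qed

lemma int_trunc:
  assumes mh: "(\<lambda>(x,\<omega>). h x \<omega>) \<in> borel_measurable (lborel \<Otimes>\<^sub>M G)"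
    and mk: "(\<lambda>(x,\<omega>). k x \<omega>) \<in> borel_measurable (lborel \<Otimes>\<^sub>M G)"
    and th: "\<forall>x \<omega>. \<not> \<gamma> \<omega> \<le> \<tau> \<longrightarrow> h x \<omega> = 0" and tk: "\<forall>x \<omega>. \<not> \<gamma> \<omega> \<le> \<tau> \<longrightarrow> k x \<omega> = 0"
    and fh: "(\<integral>\<^sup>+\<omega>. \<integral>\<^sup>+x. ennreal ((norm (h x \<omega>))\<^sup>2) \<partial>MD D \<partial>G) < \<infinity>"
    and fk: "(\<integral>\<^sup>+\<omega>. \<integral>\<^sup>+x. ennreal ((norm (k x \<omega>))\<^sup>2) \<partial>MD D \<partial>G) < \<infinity>"
    and tau: "0 \<le> \<tau>"
  shows "integrable P (Qv C h k)"
proof -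
  have mq: "(\<lambda>(x,\<omega>). k x \<omega> \<bullet> (C x \<omega> *v h x \<omega>)) \<in> borel_measurable (lborel \<Otimes>\<^sub>M G)"
    by (rule Qv_meas[OF mh mk])
  have nh: "(\<lambda>(x,\<omega>). ennreal ((norm (h x \<omega>))\<^sup>2)) \<in> borel_measurable (lborel \<Otimes>\<^sub>M G)"
    using mh by measurable
  have nk: "(\<lambda>(x,\<omega>). ennreal ((norm (k x \<omega>))\<^sup>2)) \<in> borel_measurable (lborel \<Otimes>\<^sub>M G)"
    using mk by measurable
  have "(\<integral>\<^sup>+z. ennreal (norm (Qv C h k z)) \<partial>P) = (\<integral>\<^sup>+\<omega>. \<integral>\<^sup>+x. ennreal \<bar>k x \<omega> \<bullet> (C x \<omega> *v h x \<omega>)\<bar> \<partial>MD D \<partial>G)"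
    by (subst iterP) (use mq in \<open>measurable, simp add: Qv_def\<close>)
  also have "\<dots> \<le> (\<integral>\<^sup>+\<omega>. \<integral>\<^sup>+x. ennreal \<tau> * ennreal ((norm (h x \<omega>))\<^sup>2) + ennreal \<tau> * ennreal ((norm (k x \<omega>))\<^sup>2) \<partial>MD D \<partial>G)"
  proof (rule nn_integral_mono_AE)
    show "AE \<omega> in G. (\<integral>\<^sup>+x. ennreal \<bar>k x \<omega> \<bullet> (C x \<omega> *v h x \<omega>)\<bar> \<partial>MD D) \<le>
       (\<integral>\<^sup>+x. ennreal \<tau> * ennreal ((norm (h x \<omega>))\<^sup>2) + ennreal \<tau> * ennreal ((norm (k x \<omega>))\<^sup>2) \<partial>MD D)"
      using ellU
    proof eventually_elim
      case (elim \<omega>)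
      show ?case
      proof (rule nn_integral_mono_AE)
        have "AE x in MD D. x \<in> D" by (rule AE_I2) simp
        then show "AE x in MD D. ennreal \<bar>k x \<omega> \<bullet> (C x \<omega> *v h x \<omega>)\<bar> \<le>
           ennreal \<tau> * ennreal ((norm (h x \<omega>))\<^sup>2) + ennreal \<tau> * ennreal ((norm (k x \<omega>))\<^sup>2)"
          using elim
        proof eventually_elim
          case (elim x)
          have "\<bar>k x \<omega> \<bullet> (C x \<omega> *v h x \<omega>)\<bar> \<le> \<tau> * (norm (h x \<omega>))\<^sup>2 + \<tau> * (norm (k x \<omega>))\<^sup>2"
          proof (cases "\<gamma> \<omega> \<le> \<tau>")
            case True
            have "h x \<omega> \<bullet> (C x \<omega> *v h x \<omega>) \<le> \<gamma> \<omega> * (norm (h x \<omega>))\<^sup>2" using elim by blast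
            also have "\<dots> \<le> \<tau> * (norm (h x \<omega>))\<^sup>2" using True by (intro mult_right_mono) auto
            finally have a: "h x \<omega> \<bullet> (C x \<omega> *v h x \<omega>) \<le> \<tau> * (norm (h x \<omega>))\<^sup>2" .
            have "k x \<omega> \<bullet> (C x \<omega> *v k x \<omega>) \<le> \<gamma> \<omega> * (norm (k x \<omega>))\<^sup>2" using elim by blast
            also have "\<dots> \<le> \<tau> * (norm (k x \<omega>))\<^sup>2" using True by (intro mult_right_mono) auto
            finally have b: "k x \<omega> \<bullet> (C x \<omega> *v k x \<omega>) \<le> \<tau> * (norm (k x \<omega>))\<^sup>2" .
            have c: "0 \<le> \<tau> * (norm (h x \<omega>))\<^sup>2" "0 \<le> \<tau> * (norm (k x \<omega>))\<^sup>2" using tau by auto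
            have "(h x \<omega> \<bullet> (C x \<omega> *v h x \<omega>) + k x \<omega> \<bullet> (C x \<omega> *v k x \<omega>)) / 2 \<le> \<tau> * (norm (h x \<omega>))\<^sup>2 + \<tau> * (norm (k x \<omega>))\<^sup>2"
              using a b c by (simp add: field_simps)
            then show ?thesis using polar[OF elim(1), of "k x \<omega>" \<omega> "h x \<omega>"] by linarith
          next
            case False
            then show ?thesis using th tau by simp
          qed
          then have "ennreal \<bar>k x \<omega> \<bullet> (C x \<omega> *v h x \<omega>)\<bar> \<le> ennreal (\<tau> * (norm (h x \<omega>))\<^sup>2 + \<tau> * (norm (k x \<omega>))\<^sup>2)"
            by (rule ennreal_leI)
          also have "\<dots> = ennreal \<tau> * ennreal ((norm (h x \<omega>))\<^sup>2) + ennreal \<tau> * ennreal ((norm (k x \<omega>))\<^sup>2)"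
            using tau by (simp add: ennreal_plus ennreal_mult)
          finally show ?case .
        qed
      qed
    qed
  qed
  also have "\<dots> = ennreal \<tau> * (\<integral>\<^sup>+\<omega>. \<integral>\<^sup>+x. ennreal ((norm (h x \<omega>))\<^sup>2) \<partial>MD D \<partial>G) + ennreal \<tau> * (\<integral>\<^sup>+\<omega>. \<integral>\<^sup>+x. ennreal ((norm (k x \<omega>))\<^sup>2) \<partial>MD D \<partial>G)"
  proof -
    have m1[measurable]: "(\<lambda>z. ennreal ((norm (h (fst z) (snd z)))\<^sup>2)) \<in> borel_measurable P" using toP[OF nh] by simp
    have m2[measurable]: "(\<lambda>z. ennreal ((norm (k (fst z) (snd z)))\<^sup>2)) \<in> borel_measurable P" using toP[OF nk] by simp
    have e1: "(\<integral>\<^sup>+\<omega>. \<integral>\<^sup>+x. ennreal \<tau> * ennreal ((norm (h x \<omega>))\<^sup>2) + ennreal \<tau> * ennreal ((norm (k x \<omega>))\<^sup>2) \<partial>MD D \<partial>G)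
       = (\<integral>\<^sup>+z. ennreal \<tau> * ennreal ((norm (h (fst z) (snd z)))\<^sup>2) + ennreal \<tau> * ennreal ((norm (k (fst z) (snd z)))\<^sup>2) \<partial>P)"
      by (rule iterP) (use mh mk in measurable)
    also have "\<dots> = (\<integral>\<^sup>+z. ennreal \<tau> * ennreal ((norm (h (fst z) (snd z)))\<^sup>2) \<partial>P) + (\<integral>\<^sup>+z. ennreal \<tau> * ennreal ((norm (k (fst z) (snd z)))\<^sup>2) \<partial>P)"
      by (rule nn_integral_add) measurable
    also have "\<dots> = ennreal \<tau> * (\<integral>\<^sup>+z. ennreal ((norm (h (fst z) (snd z)))\<^sup>2) \<partial>P) + ennreal \<tau> * (\<integral>\<^sup>+z. ennreal ((norm (k (fst z) (snd z)))\<^sup>2) \<partial>P)"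
      by (simp add: nn_integral_cmult[OF m1] nn_integral_cmult[OF m2])
    also have "(\<integral>\<^sup>+z. ennreal ((norm (h (fst z) (snd z)))\<^sup>2) \<partial>P) = (\<integral>\<^sup>+\<omega>. \<integral>\<^sup>+x. ennreal ((norm (h x \<omega>))\<^sup>2) \<partial>MD D \<partial>G)"
      by (rule iterP[symmetric]) (use nh in simp)
    also have "(\<integral>\<^sup>+z. ennreal ((norm (k (fst z) (snd z)))\<^sup>2) \<partial>P) = (\<integral>\<^sup>+\<omega>. \<integral>\<^sup>+x. ennreal ((norm (k x \<omega>))\<^sup>2) \<partial>MD D \<partial>G)"
      by (rule iterP[symmetric]) (use nk in simp)
    finally show ?thesis .
  qed
  also have "\<dots> < \<infinity>" using fh fk by (simp add: ennreal_mult_less_top)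
  finally have fin: "(\<integral>\<^sup>+z. ennreal (norm (Qv C h k z)) \<partial>P) < \<infinity>" .
  show ?thesis unfolding integrable_iff_bounded using fin QvP_meas[OF mh mk] by simp
qed

end



lemma sum_delta1: "finite A \<Longrightarrow> k \<in> A \<Longrightarrow> (\<Sum>i\<in>A. (if i = k then 1 else 0) * f i) = (f k :: real)"
proof -
  assume "finite A" "k \<in> A"
  have "(\<Sum>i\<in>A. (if i = k then 1 else 0) * f i) = (\<Sum>i\<in>A. if i = k then f i else 0)" by (intro sum.cong) auto
  then show ?thesis using \<open>finite A\<close> \<open>k \<in> A\<close> by simp
qed

lemma sum_delta1R: "finite A \<Longrightarrow> k \<in> A \<Longrightarrow> (\<Sum>i\<in>A. (if i = k then 1 else 0) *\<^sub>R f i) = (f k :: 'a::real_vector)"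
proof -
  assume "finite A" "k \<in> A"
  have "(\<Sum>i\<in>A. (if i = k then 1 else 0) *\<^sub>R f i) = (\<Sum>i\<in>A. if i = k then f i else 0)" by (intro sum.cong) auto
  then show ?thesis using \<open>finite A\<close> \<open>k \<in> A\<close> by simp
qed

lemma rep:
  fixes b :: "nat \<Rightarrow> (real^'n::finite \<Rightarrow> real) \<times> (real^'n \<Rightarrow> real^'n)" and cc :: "nat \<Rightarrow> 'w \<Rightarrow> real"
  assumes Vd: "V' = {(\<lambda>x. \<Sum>i<K. c i * fst (b i) x, \<lambda>x. \<Sum>i<K. c i *\<^sub>R snd (b i) x) | c. True}"
    and Wd: "W' = {(\<lambda>\<omega>. \<Sum>j<L. a j * cc j \<omega>) | a. True}"
    and w: "w \<in> tensor V' (trunc_space \<gamma> \<tau> W')"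
  shows "\<exists>d. snd w = (\<lambda>x \<omega>. \<Sum>n\<in>{..<K}\<times>{..<L}. d n *\<^sub>R ((indicator {\<omega>. \<gamma> \<omega> \<le> \<tau>} \<omega> * cc (snd n) \<omega>) *\<^sub>R snd (b (fst n)) x))"
proof -
  obtain m \<phi> \<psi> where w': "w = tens m \<phi> \<psi>" "\<forall>i<m. \<phi> i \<in> V'" "\<forall>i<m. \<psi> i \<in> trunc_space \<gamma> \<tau> W'"
    using w unfolding tensor_def by blast
  have "\<forall>i\<in>{..<m}. \<exists>\<alpha> \<beta>. snd (\<phi> i) = (\<lambda>x. \<Sum>k<K. \<alpha> k *\<^sub>R snd (b k) x) \<and>
      \<psi> i = (\<lambda>\<omega>. indicator {\<omega>. \<gamma> \<omega> \<le> \<tau>} \<omega> * (\<Sum>j<L. \<beta> j * cc j \<omega>))"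
    using w'(2,3) unfolding Vd Wd trunc_space_def by fastforce
  then have "\<forall>i\<in>{..<m}. \<exists>ab. snd (\<phi> i) = (\<lambda>x. \<Sum>k<K. fst ab k *\<^sub>R snd (b k) x) \<and>
      \<psi> i = (\<lambda>\<omega>. indicator {\<omega>. \<gamma> \<omega> \<le> \<tau>} \<omega> * (\<Sum>j<L. snd ab j * cc j \<omega>))"
  proof (intro ballI)
    fix i assume "i \<in> {..<m}"
    with \<open>\<forall>i\<in>{..<m}. \<exists>\<alpha> \<beta>. _\<close> obtain \<alpha> \<beta> where "snd (\<phi> i) = (\<lambda>x. \<Sum>k<K. \<alpha> k *\<^sub>R snd (b k) x)"
      "\<psi> i = (\<lambda>\<omega>. indicator {\<omega>. \<gamma> \<omega> \<le> \<tau>} \<omega> * (\<Sum>j<L. \<beta> j * cc j \<omega>))" by blast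
    then show "\<exists>ab. snd (\<phi> i) = (\<lambda>x. \<Sum>k<K. fst ab k *\<^sub>R snd (b k) x) \<and>
      \<psi> i = (\<lambda>\<omega>. indicator {\<omega>. \<gamma> \<omega> \<le> \<tau>} \<omega> * (\<Sum>j<L. snd ab j * cc j \<omega>))"
      by (intro exI[of _ "(\<alpha>, \<beta>)"]) simp
  qed
  then obtain AB where AB: "\<forall>i\<in>{..<m}. snd (\<phi> i) = (\<lambda>x. \<Sum>k<K. fst (AB i) k *\<^sub>R snd (b k) x) \<and>
      \<psi> i = (\<lambda>\<omega>. indicator {\<omega>. \<gamma> \<omega> \<le> \<tau>} \<omega> * (\<Sum>j<L. snd (AB i) j * cc j \<omega>))"
    by (rule bchoice[elim_format]) blast
  define \<alpha> where "\<alpha> i = fst (AB i)" for i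
  define \<beta> where "\<beta> i = snd (AB i)" for i
  define d where "d n = (\<Sum>i<m. \<alpha> i (fst n) * \<beta> i (snd n))" for n :: "nat \<times> nat"
  show ?thesis
  proof (intro exI[of _ d] ext)
    fix x \<omega>
    define Ind where "Ind = (indicator {\<omega>. \<gamma> \<omega> \<le> \<tau>} \<omega> :: real)"
    define T where "T i k j = (\<alpha> i k * \<beta> i j * (Ind * cc j \<omega>)) *\<^sub>R snd (b k) x" for i k j
    have "snd w x \<omega> = (\<Sum>i<m. \<psi> i \<omega> *\<^sub>R snd (\<phi> i) x)" by (simp add: w'(1) tens_def)
    also have "\<dots> = (\<Sum>i<m. \<Sum>k<K. \<Sum>j<L. T i k j)"
    proof (intro sum.cong refl)
      fix i assume "i \<in> {..<m}"
      then have e: "snd (\<phi> i) x = (\<Sum>k<K. \<alpha> i k *\<^sub>R snd (b k) x)"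
        "\<psi> i \<omega> = Ind * (\<Sum>j<L. \<beta> i j * cc j \<omega>)"
        using AB by (auto simp: \<alpha>_def \<beta>_def Ind_def)
      show "\<psi> i \<omega> *\<^sub>R snd (\<phi> i) x = (\<Sum>k<K. \<Sum>j<L. T i k j)"
        unfolding e T_def
        by (simp add: scaleR_sum_right scaleR_sum_left sum_distrib_left sum_distrib_right mult_ac)
    qed
    also have "\<dots> = (\<Sum>k<K. \<Sum>i<m. \<Sum>j<L. T i k j)" by (rule sum.swap)
    also have "\<dots> = (\<Sum>k<K. \<Sum>j<L. \<Sum>i<m. T i k j)" by (rule sum.cong[OF refl]) (rule sum.swap)
    also have "\<dots> = (\<Sum>n\<in>{..<K}\<times>{..<L}. \<Sum>i<m. T i (fst n) (snd n))"
      by (subst sum.cartesian_product) (simp add: case_prod_beta')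
    also have "\<dots> = (\<Sum>n\<in>{..<K}\<times>{..<L}. d n *\<^sub>R ((Ind * cc (snd n) \<omega>) *\<^sub>R snd (b (fst n)) x))"
      by (intro sum.cong refl) (simp add: T_def d_def scaleR_sum_left sum_distrib_right sum_distrib_left mult_ac)
    finally show "snd w x \<omega> = (\<Sum>n\<in>{..<K}\<times>{..<L}. d n *\<^sub>R ((indicator {\<omega>. \<gamma> \<omega> \<le> \<tau>} \<omega> * cc (snd n) \<omega>) *\<^sub>R snd (b (fst n)) x))"
      by (simp add: Ind_def)
  qed
qed




context PS begin

lemma exist:
  fixes b :: "nat \<Rightarrow> (real^'n \<Rightarrow> real) \<times> (real^'n \<Rightarrow> real^'n)" and cc :: "nat \<Rightarrow> 'w \<Rightarrow> real"
  assumes Vd: "V' = {(\<lambda>x. \<Sum>i<K. c i * fst (b i) x, \<lambda>x. \<Sum>i<K. c i *\<^sub>R snd (b i) x) | c. True}"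
    and Wd: "W' = {(\<lambda>\<omega>. \<Sum>j<L. a j * cc j \<omega>) | a. True}"
    and VH: "V' \<subseteq> H10 D" and WL: "W' \<subseteq> L2 G"
    and u: "galerkin_sol D G C f (Xspace D G) u" and tau: "0 \<le> \<tau>"
  shows "\<exists>uN. galerkin_sol D G C f (tensor V' (trunc_space \<gamma> \<tau> W')) uN"
proof -
  let ?S = "tensor V' (trunc_space \<gamma> \<tau> W')"
  define Ind where "Ind = (\<lambda>\<omega>. indicator {\<omega>. \<gamma> \<omega> \<le> \<tau>} \<omega> :: real)"
  define I where "I = {..<K} \<times> {..<L}"
  define sE where "sE = (\<lambda>n x \<omega>. (Ind \<omega> * cc (snd n) \<omega>) *\<^sub>R snd (b (fst n)) x)"
  define hA where "hA = (\<lambda>a x \<omega>. \<Sum>n\<in>I. a n *\<^sub>R sE n x \<omega>)"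
  have finI: "finite I" by (simp add: I_def)
  have bV: "b k \<in> V'" if "k < K" for k
  proof -
    have eq: "b k = (\<lambda>x. \<Sum>i<K. (\<lambda>i. if i = k then 1 else 0) i * fst (b i) x, \<lambda>x. \<Sum>i<K. (\<lambda>i. if i = k then 1 else 0) i *\<^sub>R snd (b i) x)"
      using that by (simp add: sum_delta1 sum_delta1R)
    show ?thesis unfolding Vd by (intro CollectI exI[of _ "\<lambda>i. if i = k then 1 else 0"] conjI TrueI, rule eq)
  qed
  have cW: "cc j \<in> W'" if "j < L" for j
  proof -
    have eq: "cc j = (\<lambda>\<omega>. \<Sum>i<L. (\<lambda>i. if i = j then 1 else 0) i * cc i \<omega>)"
      using that by (simp add: sum_delta1)
    show ?thesis unfolding Wd by (intro CollectI exI[of _ "\<lambda>i. if i = j then 1 else 0"] conjI TrueI, rule eq)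
  qed
  have bH: "b k \<in> H10 D" if "k < K" for k using bV[OF that] VH by auto
  have cL: "cc j \<in> L2 G" if "j < L" for j using cW[OF that] WL by auto
  note gm[measurable]
  have mInd[measurable]: "Ind \<in> borel_measurable G" unfolding Ind_def by measurable
  have uX: "u \<in> Xspace D G" and au: "\<forall>W\<in>Xspace D G. a_integrable D G C u W \<and> a_form D G C u W = F_form G f W"
    using u by (auto simp: galerkin_sol_def)
  have SX: "W \<in> ?S \<Longrightarrow> W \<in> Xspace D G" for W by (rule ttensor_X[OF VH WL])
  define E where "E n = tens 1 (\<lambda>_. b (fst n)) (\<lambda>_ \<omega>. Ind \<omega> * cc (snd n) \<omega>)" for n
  have ES: "E n \<in> ?S" if "n \<in> I" for n
  proof -
    have "(\<lambda>\<omega>. Ind \<omega> * cc (snd n) \<omega>) \<in> trunc_space \<gamma> \<tau> W'"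
      using cW that unfolding trunc_space_def Ind_def I_def by auto
    then show ?thesis unfolding E_def tensor_def using bV that I_def by fastforce
  qed
  have sndE: "snd (E n) = sE n" for n by (simp add: E_def tens_def sE_def)
  have msE: "(\<lambda>(x,\<omega>). sE n x \<omega>) \<in> borel_measurable (lborel \<Otimes>\<^sub>M G)" if "n \<in> I" for n
  proof -
    have [measurable]: "snd (b (fst n)) \<in> borel_measurable lborel" using bH that by (auto simp: I_def H10_iff)
    have [measurable]: "cc (snd n) \<in> borel_measurable G" using cL that by (auto simp: I_def L2_def)
    have "(\<lambda>z. (Ind (snd z) * cc (snd n) (snd z)) *\<^sub>R snd (b (fst n)) (fst z)) \<in> borel_measurable (lborel \<Otimes>\<^sub>M G)"
      by (rule prodmv) measurable
    then show ?thesis by (simp add: sE_def case_prod_beta')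
  qed
  have tsE: "\<forall>x \<omega>. \<not> \<gamma> \<omega> \<le> \<tau> \<longrightarrow> sE n x \<omega> = 0" for n by (simp add: sE_def Ind_def)
  have fsE: "(\<integral>\<^sup>+\<omega>. \<integral>\<^sup>+x. ennreal ((norm (sE n x \<omega>))\<^sup>2) \<partial>MD D \<partial>G) < \<infinity>" if "n \<in> I" for n
  proof -
    have bHn: "b (fst n) \<in> H10 D" and cLn: "cc (snd n) \<in> L2 G" using bH cL that by (auto simp: I_def)
    have [measurable]: "snd (b (fst n)) \<in> borel_measurable lborel" using bHn by (auto simp: H10_iff)
    have [measurable]: "cc (snd n) \<in> borel_measurable G" using cLn by (auto simp: L2_def)
    define B where "B = (\<integral>\<^sup>+x. ennreal ((norm (snd (b (fst n)) x))\<^sup>2) \<partial>MD D)"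
    have mB: "(\<lambda>x. ennreal ((norm (snd (b (fst n)) x))\<^sup>2)) \<in> borel_measurable (MD D)"
      by (rule MDm) measurable
    have mA: "(\<lambda>\<omega>. ennreal ((Ind \<omega> * cc (snd n) \<omega>)\<^sup>2)) \<in> borel_measurable G" by measurable
    have "(\<integral>\<^sup>+\<omega>. \<integral>\<^sup>+x. ennreal ((norm (sE n x \<omega>))\<^sup>2) \<partial>MD D \<partial>G) =
        (\<integral>\<^sup>+\<omega>. \<integral>\<^sup>+x. ennreal ((Ind \<omega> * cc (snd n) \<omega>)\<^sup>2) * ennreal ((norm (snd (b (fst n)) x))\<^sup>2) \<partial>MD D \<partial>G)"
      by (simp add: sE_def power_mult_distrib ennreal_mult[symmetric])
    also have "\<dots> = (\<integral>\<^sup>+\<omega>. ennreal ((Ind \<omega> * cc (snd n) \<omega>)\<^sup>2) * B \<partial>G)"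
      by (simp add: nn_integral_cmult[OF mB] B_def)
    also have "\<dots> = (\<integral>\<^sup>+\<omega>. ennreal ((Ind \<omega> * cc (snd n) \<omega>)\<^sup>2) \<partial>G) * B"
      by (rule nn_integral_multc[OF mA])
    also have "\<dots> < \<infinity>"
    proof -
      have "(\<lambda>\<omega>. Ind \<omega> * cc (snd n) \<omega>) \<in> L2 G" unfolding Ind_def by (rule trunc_L2[OF cLn])
      then have "(\<integral>\<^sup>+\<omega>. ennreal ((Ind \<omega> * cc (snd n) \<omega>)\<^sup>2) \<partial>G) < \<infinity>" by (simp add: L2_def)
      moreover have "B < \<infinity>" unfolding B_def using H10_gfin[OF bHn openD] .
      ultimately show ?thesis by (simp add: ennreal_mult_less_top)
    qed
    finally show ?thesis .
  qed
  define Gm where "Gm n m = (\<integral>z. Qv C (sE n) (sE m) z \<partial>P)" for n m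
  define Fv where "Fv m = (\<integral>z. Qv C (snd u) (sE m) z \<partial>P)" for m
  have iG: "integrable P (Qv C (sE n) (sE m))" if "n \<in> I" "m \<in> I" for n m
    by (rule int_trunc[OF msE[OF that(1)] msE[OF that(2)] tsE tsE fsE[OF that(1)] fsE[OF that(2)] tau])
  have iF: "integrable P (Qv C (snd u) (sE m))" if "m \<in> I" for m
    using au SX[OF ES[OF that]] by (auto simp: a_int_iff sndE)
  have symG: "\<forall>n m. Gm n m = Gm m n"
    unfolding Gm_def by (intro allI Bochner_Integration.integral_cong refl Qv_sym) auto
  have QvA: "Qv C (hA a) (hA d) z = (\<Sum>m\<in>I. \<Sum>n\<in>I. d m * a n * Qv C (sE n) (sE m) z)" for a d z
    unfolding hA_def by (rule Qv_sum)
  have iA: "integrable P (Qv C (hA a) (hA d))" for a d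
    unfolding QvA[abs_def]
  proof (rule Bochner_Integration.integrable_sum, rule Bochner_Integration.integrable_sum, rule integrable_mult_right)
    fix m n assume "m \<in> I" "n \<in> I"
    then show "integrable P (Qv C (sE n) (sE m))" by (rule iG[rotated])
  qed
  have iGc: "integrable P (\<lambda>z. c * Qv C (sE n) (sE m) z)" if "n \<in> I" "m \<in> I" for c n m
    using iG[OF that] by simp
  have intA: "(\<integral>z. Qv C (hA a) (hA d) z \<partial>P) = (\<Sum>m\<in>I. \<Sum>n\<in>I. d m * a n * Gm n m)" for a d
  proof -
    have "(\<integral>z. Qv C (hA a) (hA d) z \<partial>P) = (\<integral>z. (\<Sum>m\<in>I. \<Sum>n\<in>I. d m * a n * Qv C (sE n) (sE m) z) \<partial>P)"
      unfolding QvA ..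
    also have "\<dots> = (\<Sum>m\<in>I. \<integral>z. (\<Sum>n\<in>I. d m * a n * Qv C (sE n) (sE m) z) \<partial>P)"
    proof (rule Bochner_Integration.integral_sum)
      fix m assume "m \<in> I"
      show "integrable P (\<lambda>z. \<Sum>n\<in>I. d m * a n * Qv C (sE n) (sE m) z)"
        by (rule Bochner_Integration.integrable_sum) (rule iGc, simp, rule \<open>m \<in> I\<close>)
    qed
    also have "\<dots> = (\<Sum>m\<in>I. \<Sum>n\<in>I. \<integral>z. d m * a n * Qv C (sE n) (sE m) z \<partial>P)"
    proof (rule sum.cong[OF refl])
      fix m assume "m \<in> I"
      show "(\<integral>z. (\<Sum>n\<in>I. d m * a n * Qv C (sE n) (sE m) z) \<partial>P) = (\<Sum>n\<in>I. \<integral>z. d m * a n * Qv C (sE n) (sE m) z \<partial>P)"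
        by (rule Bochner_Integration.integral_sum) (rule iGc, simp, rule \<open>m \<in> I\<close>)
    qed
    also have "\<dots> = (\<Sum>m\<in>I. \<Sum>n\<in>I. d m * a n * Gm n m)" by (simp add: Gm_def)
    finally show ?thesis .
  qed
  have QA: "(\<Sum>n\<in>I. \<Sum>m\<in>I. a n * a m * Gm n m) = (\<integral>z. Qv C (hA a) (hA a) z \<partial>P)" for a
    unfolding intA by (subst sum.swap) (simp add: mult_ac)
  have LA: "(\<Sum>m\<in>I. a m * Fv m) = (\<integral>z. Qv C (snd u) (hA a) z \<partial>P)" for a
  proof -
    have "(\<integral>z. Qv C (snd u) (hA a) z \<partial>P) = (\<integral>z. (\<Sum>m\<in>I. a m * Qv C (snd u) (sE m) z) \<partial>P)"
      unfolding hA_def Qv_sum2 ..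
    also have "\<dots> = (\<Sum>m\<in>I. \<integral>z. a m * Qv C (snd u) (sE m) z \<partial>P)"
      by (rule Bochner_Integration.integral_sum) (use iF in simp)
    also have "\<dots> = (\<Sum>m\<in>I. a m * Fv m)" by (simp add: Fv_def)
    finally show ?thesis ..
  qed
  have psd: "\<forall>a. 0 \<le> (\<Sum>n\<in>I. \<Sum>m\<in>I. a n * a m * Gm n m)"
    unfolding QA by (intro allI integral_nonneg_AE AE_I2 Qv_nonneg)
  have null: "\<forall>a. (\<Sum>n\<in>I. \<Sum>m\<in>I. a n * a m * Gm n m) = 0 \<longrightarrow> (\<Sum>m\<in>I. a m * Fv m) = 0"
  proof (intro allI impI)
    fix a assume "(\<Sum>n\<in>I. \<Sum>m\<in>I. a n * a m * Gm n m) = 0"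
    then have "(\<integral>z. Qv C (hA a) (hA a) z \<partial>P) = 0" unfolding QA .
    then have "AE z in P. Qv C (hA a) (hA a) z = 0"
      using integral_nonneg_eq_0_iff_AE[OF iA] by (auto intro: AE_I2 Qv_nonneg)
    then have "AE z in P. Qv C (snd u) (hA a) z = 0"
    proof (rule AE_mp[OF _ AE_I2], intro impI)
      fix z assume "z \<in> space P" "Qv C (hA a) (hA a) z = 0"
      then have "hA a (fst z) (snd z) = 0" by (rule Qv_zero)
      then show "Qv C (snd u) (hA a) z = 0" by (simp add: Qv_def)
    qed
    then have "(\<integral>z. Qv C (snd u) (hA a) z \<partial>P) = 0" by (rule integral_eq_zero_AE)
    then show "(\<Sum>m\<in>I. a m * Fv m) = 0" unfolding LA .
  qed
  obtain a where sol: "\<forall>m\<in>I. (\<Sum>n\<in>I. a n * Gm n m) = Fv m"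
    using linsolve[OF finI symG] psd null by blast
  define U where "U = tens K b (\<lambda>k \<omega>. Ind \<omega> * (\<Sum>j<L. a (k,j) * cc j \<omega>))"
  have US: "U \<in> ?S"
  proof -
    have "(\<lambda>\<omega>. Ind \<omega> * (\<Sum>j<L. a (k,j) * cc j \<omega>)) \<in> trunc_space \<gamma> \<tau> W'" for k
      unfolding trunc_space_def Wd Ind_def
      by (rule image_eqI[where x="\<lambda>\<omega>. \<Sum>j<L. a (k,j) * cc j \<omega>"], simp,
          intro CollectI exI[of _ "\<lambda>j. a (k,j)"] conjI TrueI refl)
    then show ?thesis unfolding U_def tensor_def using bV by blast
  qed
  have sndU: "snd U = hA a"
  proof (intro ext)
    fix x \<omega>
    have "snd U x \<omega> = (\<Sum>k<K. \<Sum>j<L. a (k,j) *\<^sub>R sE (k,j) x \<omega>)"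
      by (simp add: U_def tens_def sE_def scaleR_sum_left sum_distrib_left mult_ac)
    also have "\<dots> = hA a x \<omega>"
      unfolding hA_def I_def by (subst sum.cartesian_product) (simp add: case_prod_beta')
    finally show "snd U x \<omega> = hA a x \<omega>" .
  qed
  have repW: "\<exists>d. snd W = hA d" if "W \<in> ?S" for W
    using rep[OF Vd Wd that] unfolding hA_def sE_def I_def Ind_def .
  show ?thesis
  proof (intro exI[of _ U])
    show "galerkin_sol D G C f ?S U"
      unfolding galerkin_sol_def
    proof (intro conjI US ballI)
      fix W assume W: "W \<in> ?S"
      obtain d where d: "snd W = hA d" using repW[OF W] by blast
      show "a_integrable D G C U W" unfolding a_int_iff sndU d by (rule iA)
      have "a_form D G C U W = (\<integral>z. Qv C (hA a) (hA d) z \<partial>P)"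
        using a_form_eq[of U W] iA by (simp add: a_int_iff sndU d)
      also have "\<dots> = (\<Sum>m\<in>I. d m * (\<Sum>n\<in>I. a n * Gm n m))"
        unfolding intA by (simp add: sum_distrib_left mult_ac)
      also have "\<dots> = (\<Sum>m\<in>I. d m * Fv m)" using sol by simp
      also have "\<dots> = (\<integral>z. Qv C (snd u) (snd W) z \<partial>P)" unfolding LA d ..
      also have "\<dots> = a_form D G C u W"
        using a_form_eq[of u W] au SX[OF W] by simp
      also have "\<dots> = F_form G f W" using au SX[OF W] by simp
      finally show "a_form D G C U W = F_form G f W" .
    qed
  qed
qed

end



lemma sq_add: "(norm (x + y))\<^sup>2 \<le> 2 * (norm x)\<^sup>2 + 2 * (norm (y::'a::real_normed_vector))\<^sup>2"
  using sq_tri[of "x + y" y] by simp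

lemma mono_sets: "\<forall>q. A q \<subseteq> A (Suc q) \<Longrightarrow> i \<le> j \<Longrightarrow> A i \<subseteq> A j"
  using lift_Suc_mono_le[of A] by blast

lemma ennreal_le_frac:
  assumes "X < ennreal \<eta>" "\<eta> = \<delta> / (enn2real B + 1)" "B < \<infinity>" "0 \<le> \<delta>"
  shows "X * B \<le> ennreal \<delta>"
proof -
  obtain b where b: "B = ennreal b" "0 \<le> b" using assms(3) by (cases B) auto
  have "X * B \<le> ennreal \<eta> * ennreal b" unfolding b(1) by (rule mult_right_mono) (use assms(1) in auto)
  also have "\<dots> = ennreal (\<eta> * b)"
  proof -
    have "0 \<le> \<eta>" using assms(2,4) b by simp
    then show ?thesis by (rule ennreal_mult'[symmetric])
  qed
  also have "\<eta> * b \<le> \<delta>"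
  proof -
    have "\<eta> * b = \<delta> * (b / (b + 1))" using assms(2) b by simp
    also have "\<dots> \<le> \<delta> * 1" using assms(4) b by (intro mult_left_mono) auto
    finally show ?thesis by simp
  qed
  finally show ?thesis by (simp add: ennreal_leI order_trans)
qed

context PS begin

lemma dens:
  fixes V :: "nat \<Rightarrow> ((real^'n \<Rightarrow> real) \<times> (real^'n \<Rightarrow> real^'n)) set" and W :: "nat \<Rightarrow> ('w \<Rightarrow> real) set"
  assumes VH: "\<forall>q. V q \<subseteq> H10 D" and Vmono: "\<forall>q. V q \<subseteq> V (Suc q)"
    and Vdn: "\<forall>vg\<in>H10 D. \<forall>\<epsilon>>0. \<exists>q. \<exists>wh\<in>V q. H1sq D (\<lambda>x. fst vg x - fst wh x, \<lambda>x. snd vg x - snd wh x) < ennreal \<epsilon>"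
    and WL: "\<forall>p. W p \<subseteq> L2 G" and Wmono: "\<forall>p. W p \<subseteq> W (Suc p)"
    and Wdn: "\<forall>\<psi>\<in>L2 G. \<forall>\<epsilon>>0. \<exists>p. \<exists>\<phi>\<in>W p. (\<integral>\<^sup>+\<omega>. ennreal ((\<psi> \<omega> - \<phi> \<omega>)\<^sup>2) \<partial>G) < ennreal \<epsilon>"
    and uX: "u \<in> Xspace D G" and eps: "0 < \<epsilon>"
  shows "\<exists>q p. \<exists>v\<in>tensor (V q) (W p). normXsq D G (pdiff u v) < ennreal \<epsilon>"
proof -
  from uX obtain S where Sin: "\<forall>k. S k \<in> tensor ((\<lambda>\<phi>. (\<phi>, grad \<phi>)) ` Cc_inf D) (L2 G)"
    and lim: "(\<lambda>k. Xfullsq D G (pdiff u (S k))) \<longlonglongrightarrow> 0"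
    unfolding Xspace_def by blast
  have "ennreal (\<epsilon>/4) > 0" using eps by simp
  from order_tendstoD(2)[OF lim this] obtain k where k: "Xfullsq D G (pdiff u (S k)) < ennreal (\<epsilon>/4)"
    by (auto simp: eventually_sequentially)
  obtain m \<phi> \<psi> where Sk: "S k = tens m \<phi> \<psi>" and ph: "\<forall>i<m. \<phi> i \<in> (\<lambda>\<phi>. (\<phi>, grad \<phi>)) ` Cc_inf D"
    and ps: "\<forall>i<m. \<psi> i \<in> L2 G"
    using Sin unfolding tensor_def by blast
  define \<theta> where "\<theta> i = fst (\<phi> i)" for i
  have th: "\<phi> i = (\<theta> i, grad (\<theta> i))" "\<theta> i \<in> Cc_inf D" if "i < m" for i
    using ph that by (auto simp: \<theta>_def)
  define \<delta> where "\<delta> = \<epsilon> / (16 * (real m * real m + 1))"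
  have dpos: "\<delta> > 0" unfolding \<delta>_def using eps by (intro divide_pos_pos mult_pos_pos) (auto intro!: add_nonneg_pos)
  define Bg where "Bg i = (\<integral>\<^sup>+x. ennreal ((norm (grad (\<theta> i) x))\<^sup>2) \<partial>MD D)" for i
  have Bfin: "Bg i < \<infinity>" if "i < m" for i unfolding Bg_def using Cc_gfin[OF th(2)[OF that] openD] .
  define T1 where "T1 i c = (\<integral>\<^sup>+\<omega>. ennreal ((\<psi> i \<omega> - c \<omega>)\<^sup>2) \<partial>G) * Bg i" for i c
  define T2 where "T2 i c (w :: (real^'n \<Rightarrow> real) \<times> (real^'n \<Rightarrow> real^'n)) = (\<integral>\<^sup>+\<omega>. ennreal ((c \<omega>)\<^sup>2) \<partial>G) *
      (\<integral>\<^sup>+x. ennreal ((norm (grad (\<theta> i) x - snd w x))\<^sup>2) \<partial>MD D)" for i c w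
  have ex: "\<exists>pc qw. snd pc \<in> W (fst pc) \<and> snd qw \<in> V (fst qw) \<and>
      T1 i (snd pc) \<le> ennreal \<delta> \<and> T2 i (snd pc) (snd qw) \<le> ennreal \<delta>" if i: "i \<in> {..<m}" for i
  proof -
    define \<eta> where "\<eta> = \<delta> / (enn2real (Bg i) + 1)"
    have "\<eta> > 0" using dpos by (simp add: \<eta>_def add_nonneg_pos)
    then obtain p c where c: "c \<in> W p" "(\<integral>\<^sup>+\<omega>. ennreal ((\<psi> i \<omega> - c \<omega>)\<^sup>2) \<partial>G) < ennreal \<eta>"
      using Wdn ps i by fastforce
    have t1: "T1 i c \<le> ennreal \<delta>" unfolding T1_def
      by (rule ennreal_le_frac[OF c(2) \<eta>_def Bfin]) (use i dpos in auto)
    define A where "A = (\<integral>\<^sup>+\<omega>. ennreal ((c \<omega>)\<^sup>2) \<partial>G)"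
    have Afin: "A < \<infinity>" using c(1) WL by (auto simp: A_def L2_def)
    define \<eta>' where "\<eta>' = \<delta> / (enn2real A + 1)"
    have "\<eta>' > 0" using dpos by (simp add: \<eta>'_def add_nonneg_pos)
    moreover have "(\<theta> i, grad (\<theta> i)) \<in> H10 D" using th i by (auto intro: Cc_H10)
    ultimately obtain q w where w: "w \<in> V q"
      "H1sq D (\<lambda>x. \<theta> i x - fst w x, \<lambda>x. grad (\<theta> i) x - snd w x) < ennreal \<eta>'"
      using Vdn by fastforce
    have "(\<integral>\<^sup>+x. ennreal ((norm (grad (\<theta> i) x - snd w x))\<^sup>2) \<partial>MD D) \<le> H1sq D (\<lambda>x. \<theta> i x - fst w x, \<lambda>x. grad (\<theta> i) x - snd w x)"
      unfolding H1sq_def by (intro nn_integral_mono ennreal_leI) simp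
    then have "(\<integral>\<^sup>+x. ennreal ((norm (grad (\<theta> i) x - snd w x))\<^sup>2) \<partial>MD D) < ennreal \<eta>'" using w(2) by simp
    then have "(\<integral>\<^sup>+x. ennreal ((norm (grad (\<theta> i) x - snd w x))\<^sup>2) \<partial>MD D) * A \<le> ennreal \<delta>"
      by (rule ennreal_le_frac[OF _ \<eta>'_def Afin]) (use dpos in auto)
    then have t2: "T2 i c w \<le> ennreal \<delta>" by (simp add: T2_def A_def mult.commute)
    show ?thesis using c(1) w(1) t1 t2 by (intro exI[of _ "(p, c)"] exI[of _ "(q, w)"]) simp
  qed
  have "\<forall>i\<in>{..<m}. \<exists>pcqw. snd (fst pcqw) \<in> W (fst (fst pcqw)) \<and> snd (snd pcqw) \<in> V (fst (snd pcqw)) \<and>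
      T1 i (snd (fst pcqw)) \<le> ennreal \<delta> \<and> T2 i (snd (fst pcqw)) (snd (snd pcqw)) \<le> ennreal \<delta>"
  proof
    fix i assume "i \<in> {..<m}"
    from ex[OF this] obtain pc qw where "snd pc \<in> W (fst pc) \<and> snd qw \<in> V (fst qw) \<and>
      T1 i (snd pc) \<le> ennreal \<delta> \<and> T2 i (snd pc) (snd qw) \<le> ennreal \<delta>" by blast
    then show "\<exists>pcqw. snd (fst pcqw) \<in> W (fst (fst pcqw)) \<and> snd (snd pcqw) \<in> V (fst (snd pcqw)) \<and>
      T1 i (snd (fst pcqw)) \<le> ennreal \<delta> \<and> T2 i (snd (fst pcqw)) (snd (snd pcqw)) \<le> ennreal \<delta>"
      by (intro exI[of _ "(pc, qw)"]) simp
  qed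
  then obtain Z where Z: "\<forall>i\<in>{..<m}. snd (fst (Z i)) \<in> W (fst (fst (Z i))) \<and> snd (snd (Z i)) \<in> V (fst (snd (Z i))) \<and>
      T1 i (snd (fst (Z i))) \<le> ennreal \<delta> \<and> T2 i (snd (fst (Z i))) (snd (snd (Z i))) \<le> ennreal \<delta>"
    by (rule bchoice[elim_format]) blast
  define c where "c i = snd (fst (Z i))" for i
  define w where "w i = snd (snd (Z i))" for i
  define Pm where "Pm = Max (insert 0 ((\<lambda>i. fst (fst (Z i))) ` {..<m}))"
  define Qm where "Qm = Max (insert 0 ((\<lambda>i. fst (snd (Z i))) ` {..<m}))"
  have cW: "c i \<in> W Pm" if "i < m" for i
  proof -
    have "fst (fst (Z i)) \<le> Pm" unfolding Pm_def using that by (intro Max_ge) auto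
    then show ?thesis using Z that mono_sets[OF Wmono] unfolding c_def by blast
  qed
  have wV: "w i \<in> V Qm" if "i < m" for i
  proof -
    have "fst (snd (Z i)) \<le> Qm" unfolding Qm_def using that by (intro Max_ge) auto
    then show ?thesis using Z that mono_sets[OF Vmono] unfolding w_def by blast
  qed
  have T1: "T1 i (c i) \<le> ennreal \<delta>" and T2: "T2 i (c i) (w i) \<le> ennreal \<delta>" if "i < m" for i
    using Z that by (auto simp: c_def w_def)
  define v where "v = tens m w c"
  have vT: "v \<in> tensor (V Qm) (W Pm)" unfolding v_def tensor_def using cW wV by blast
  have vX: "v \<in> Xspace D G" using tensor_X[OF _ _ vT] VH WL by blast
  have SkX: "S k \<in> Xspace D G" unfolding Sk using th ps by (intro tens_X) (auto intro: Cc_H10)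
  have mu: "(\<lambda>(x,\<omega>). snd u x \<omega>) \<in> borel_measurable (lborel \<Otimes>\<^sub>M G)" by (rule X_meas[OF uX])
  have mv: "(\<lambda>(x,\<omega>). snd v x \<omega>) \<in> borel_measurable (lborel \<Otimes>\<^sub>M G)" by (rule X_meas[OF vX])
  have mS: "(\<lambda>(x,\<omega>). snd (S k) x \<omega>) \<in> borel_measurable (lborel \<Otimes>\<^sub>M G)" by (rule X_meas[OF SkX])
  have cm: "c i \<in> borel_measurable G" "w i \<in> H10 D" "\<psi> i \<in> borel_measurable G" if "i < m" for i
    using cW[OF that] wV[OF that] WL VH ps that by (auto simp: L2_def)
  have part2: "normXsq D G (pdiff (S k) v) \<le> (\<Sum>i<m. ennreal (2 * real m) * T1 i (c i) + ennreal (2 * real m) * T2 i (c i) (w i))"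
  proof -
    define g where "g i x = grad (\<theta> i) x" for i x
    define A1 where "A1 i \<omega> = ennreal (2 * real m * (\<psi> i \<omega> - c i \<omega>)\<^sup>2)" for i \<omega>
    define A2 where "A2 i \<omega> = ennreal (2 * real m * (c i \<omega>)\<^sup>2)" for i \<omega>
    define a1 where "a1 i x = ennreal ((norm (g i x))\<^sup>2)" for i x
    define a2 where "a2 i x = ennreal ((norm (g i x - snd (w i) x))\<^sup>2)" for i x
    have mA1: "A1 i \<in> borel_measurable G" "A2 i \<in> borel_measurable G" if "i < m" for i
    proof -
      note cm[OF that, measurable]
      show "A1 i \<in> borel_measurable G" "A2 i \<in> borel_measurable G" unfolding A1_def A2_def by measurable
    qed
    have ma1: "a1 i \<in> borel_measurable (MD D)" "a2 i \<in> borel_measurable (MD D)" if "i < m" for i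
    proof -
      have [measurable]: "grad (\<theta> i) \<in> borel_measurable lborel" using th(2)[OF that] Cc_grad_meas by blast
      have [measurable]: "snd (w i) \<in> borel_measurable lborel" using cm(2)[OF that] by (simp add: H10_iff)
      show "a1 i \<in> borel_measurable (MD D)" "a2 i \<in> borel_measurable (MD D)"
        unfolding a1_def a2_def g_def by (rule MDm, measurable)+
    qed
    have pt: "ennreal ((norm (snd (pdiff (S k) v) x \<omega>))\<^sup>2) \<le> (\<Sum>i<m. A1 i \<omega> * a1 i x + A2 i \<omega> * a2 i x)" for x \<omega>
    proof -
      have e: "snd (pdiff (S k) v) x \<omega> = (\<Sum>i<m. (\<psi> i \<omega> - c i \<omega>) *\<^sub>R g i x + c i \<omega> *\<^sub>R (g i x - snd (w i) x))"
      proof -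
        have "snd (pdiff (S k) v) x \<omega> = (\<Sum>i<m. \<psi> i \<omega> *\<^sub>R snd (\<phi> i) x) - (\<Sum>i<m. c i \<omega> *\<^sub>R snd (w i) x)"
          by (simp add: pdiff_def Sk v_def tens_def)
        also have "(\<Sum>i<m. \<psi> i \<omega> *\<^sub>R snd (\<phi> i) x) = (\<Sum>i<m. \<psi> i \<omega> *\<^sub>R g i x)"
          using th by (intro sum.cong) (auto simp: g_def)
        finally show ?thesis
          by (simp add: sum_subtractf[symmetric] sum.distrib[symmetric] algebra_simps)
      qed
      have "(norm (snd (pdiff (S k) v) x \<omega>))\<^sup>2 \<le> real m * (\<Sum>i<m. (norm ((\<psi> i \<omega> - c i \<omega>) *\<^sub>R g i x + c i \<omega> *\<^sub>R (g i x - snd (w i) x)))\<^sup>2)"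
        unfolding e using normsum_sq_le[of _ "{..<m}"] by simp
      also have "\<dots> \<le> real m * (\<Sum>i<m. 2 * (\<psi> i \<omega> - c i \<omega>)\<^sup>2 * (norm (g i x))\<^sup>2 + 2 * (c i \<omega>)\<^sup>2 * (norm (g i x - snd (w i) x))\<^sup>2)"
        by (intro mult_left_mono sum_mono order_trans[OF sq_add]) (auto simp: power_mult_distrib)
      also have "\<dots> = (\<Sum>i<m. (2 * real m * (\<psi> i \<omega> - c i \<omega>)\<^sup>2) * (norm (g i x))\<^sup>2 + (2 * real m * (c i \<omega>)\<^sup>2) * (norm (g i x - snd (w i) x))\<^sup>2)"
        by (simp add: sum_distrib_left algebra_simps)
      finally have "ennreal ((norm (snd (pdiff (S k) v) x \<omega>))\<^sup>2) \<le> ennreal (\<Sum>i<m. (2 * real m * (\<psi> i \<omega> - c i \<omega>)\<^sup>2) * (norm (g i x))\<^sup>2 + (2 * real m * (c i \<omega>)\<^sup>2) * (norm (g i x - snd (w i) x))\<^sup>2)"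
        by (rule ennreal_leI)
      also have "\<dots> = (\<Sum>i<m. A1 i \<omega> * a1 i x + A2 i \<omega> * a2 i x)"
        by (subst sum_ennreal[symmetric]) (auto intro!: sum.cong simp: A1_def A2_def a1_def a2_def ennreal_mult ennreal_plus)
      finally show ?thesis .
    qed
    have "normXsq D G (pdiff (S k) v) \<le> (\<integral>\<^sup>+\<omega>. \<integral>\<^sup>+x. (\<Sum>i<m. A1 i \<omega> * a1 i x + A2 i \<omega> * a2 i x) \<partial>MD D \<partial>G)"
      unfolding normXsq_def by (intro nn_integral_mono pt)
    also have "\<dots> = (\<integral>\<^sup>+\<omega>. (\<Sum>i<m. A1 i \<omega> * (\<integral>\<^sup>+x. a1 i x \<partial>MD D) + A2 i \<omega> * (\<integral>\<^sup>+x. a2 i x \<partial>MD D)) \<partial>G)"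
    proof (intro nn_integral_cong)
      fix \<omega>
      show "(\<integral>\<^sup>+x. (\<Sum>i<m. A1 i \<omega> * a1 i x + A2 i \<omega> * a2 i x) \<partial>MD D) =
          (\<Sum>i<m. A1 i \<omega> * (\<integral>\<^sup>+x. a1 i x \<partial>MD D) + A2 i \<omega> * (\<integral>\<^sup>+x. a2 i x \<partial>MD D))"
        using ma1 by (subst nn_integral_sum) (auto intro!: sum.cong simp: nn_integral_add nn_integral_cmult)
    qed
    also have "\<dots> = (\<Sum>i<m. (\<integral>\<^sup>+\<omega>. A1 i \<omega> \<partial>G) * (\<integral>\<^sup>+x. a1 i x \<partial>MD D) + (\<integral>\<^sup>+\<omega>. A2 i \<omega> \<partial>G) * (\<integral>\<^sup>+x. a2 i x \<partial>MD D))"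
      using mA1 by (subst nn_integral_sum) (auto intro!: sum.cong simp: nn_integral_add nn_integral_multc)
    also have "\<dots> = (\<Sum>i<m. ennreal (2 * real m) * T1 i (c i) + ennreal (2 * real m) * T2 i (c i) (w i))"
    proof (intro sum.cong refl)
      fix i assume "i \<in> {..<m}"
      then have i: "i < m" by simp
      note cm[OF i, measurable]
      have "(\<integral>\<^sup>+\<omega>. A1 i \<omega> \<partial>G) = ennreal (2 * real m) * (\<integral>\<^sup>+\<omega>. ennreal ((\<psi> i \<omega> - c i \<omega>)\<^sup>2) \<partial>G)"
        unfolding A1_def by (subst nn_integral_cmult[symmetric]) (measurable, simp add: ennreal_mult)
      moreover have "(\<integral>\<^sup>+\<omega>. A2 i \<omega> \<partial>G) = ennreal (2 * real m) * (\<integral>\<^sup>+\<omega>. ennreal ((c i \<omega>)\<^sup>2) \<partial>G)"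
        unfolding A2_def by (subst nn_integral_cmult[symmetric]) (measurable, simp add: ennreal_mult)
      ultimately show "(\<integral>\<^sup>+\<omega>. A1 i \<omega> \<partial>G) * (\<integral>\<^sup>+x. a1 i x \<partial>MD D) + (\<integral>\<^sup>+\<omega>. A2 i \<omega> \<partial>G) * (\<integral>\<^sup>+x. a2 i x \<partial>MD D)
          = ennreal (2 * real m) * T1 i (c i) + ennreal (2 * real m) * T2 i (c i) (w i)"
        by (simp add: T1_def T2_def Bg_def a1_def a2_def g_def mult.assoc)
    qed
    finally show ?thesis .
  qed
  have part2': "normXsq D G (pdiff (S k) v) \<le> ennreal (\<epsilon> / 4)"
  proof -
    have "(\<Sum>i<m. ennreal (2 * real m) * T1 i (c i) + ennreal (2 * real m) * T2 i (c i) (w i)) \<le>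
        (\<Sum>i<m. ennreal (2 * real m) * ennreal \<delta> + ennreal (2 * real m) * ennreal \<delta>)"
      using T1 T2 by (intro sum_mono add_mono mult_left_mono) auto
    also have "\<dots> = ennreal (real m * (4 * real m * \<delta>))"
    proof -
      have "(\<Sum>i<m. ennreal (2 * real m) * ennreal \<delta> + ennreal (2 * real m) * ennreal \<delta>) = (\<Sum>i<m. ennreal (4 * real m * \<delta>))"
        using dpos by (intro sum.cong refl) (simp add: ennreal_mult[symmetric] ennreal_plus[symmetric] del: ennreal_plus)
      also have "\<dots> = ennreal (\<Sum>i<m. 4 * real m * \<delta>)" using dpos by (intro sum_ennreal) simp
      finally show ?thesis by simp
    qed
    also have "\<dots> \<le> ennreal (\<epsilon> / 4)"
    proof (rule ennreal_leI)
      define M where "M = real m * real m"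
      have M0: "0 \<le> M" by (simp add: M_def)
      have M1: "M + 1 \<noteq> 0" using M0 by linarith
      have "real m * (4 * real m * \<delta>) = 4 * M * (\<epsilon> / (16 * (M + 1)))"
        by (simp add: \<delta>_def M_def mult_ac)
      also have "\<dots> = \<epsilon> / 4 * (M / (M + 1))" using M1 by (simp add: field_simps)
      also have "\<dots> = \<epsilon> / 4 * (real m * real m / (real m * real m + 1))" by (simp add: M_def)
      finally have "real m * (4 * real m * \<delta>) = \<epsilon> / 4 * (real m * real m / (real m * real m + 1))" .
      also have "\<dots> \<le> \<epsilon> / 4 * 1"
      proof (intro mult_left_mono)
        have "M / (M + 1) \<le> 1" using M0 by (subst divide_le_eq_1_pos) auto
        then show "real m * real m / (real m * real m + 1) \<le> 1" by (simp add: M_def)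
      qed (use eps in auto)
      finally show "real m * (4 * real m * \<delta>) \<le> \<epsilon> / 4" by simp
    qed
    finally show ?thesis using part2 by (simp add: order_trans)
  qed
  have part1: "normXsq D G (pdiff u (S k)) < ennreal (\<epsilon> / 4)"
  proof -
    have "normXsq D G (pdiff u (S k)) \<le> Xfullsq D G (pdiff u (S k))"
      unfolding normXsq_def Xfullsq_def by (intro nn_integral_mono ennreal_leI) simp
    then show ?thesis using k by simp
  qed
  have split: "normXsq D G (pdiff u v) \<le> 2 * normXsq D G (pdiff u (S k)) + 2 * normXsq D G (pdiff (S k) v)"
  proof -
    have m1: "(\<lambda>(x,\<omega>). snd (pdiff u v) x \<omega>) \<in> borel_measurable (lborel \<Otimes>\<^sub>M G)"
      using mu mv by (simp add: pdiff_def case_prod_beta')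
    have m2: "(\<lambda>(x,\<omega>). snd (pdiff u (S k)) x \<omega>) \<in> borel_measurable (lborel \<Otimes>\<^sub>M G)"
      using mu mS by (simp add: pdiff_def case_prod_beta')
    have m3: "(\<lambda>(x,\<omega>). snd (pdiff (S k) v) x \<omega>) \<in> borel_measurable (lborel \<Otimes>\<^sub>M G)"
      using mS mv by (simp add: pdiff_def case_prod_beta')
    have n2: "(\<lambda>z. ennreal ((norm (snd (pdiff u (S k)) (fst z) (snd z)))\<^sup>2)) \<in> borel_measurable P"
      using toP[OF m2] by measurable
    have n3: "(\<lambda>z. ennreal ((norm (snd (pdiff (S k) v) (fst z) (snd z)))\<^sup>2)) \<in> borel_measurable P"
      using toP[OF m3] by measurable
    have "normXsq D G (pdiff u v) \<le> (\<integral>\<^sup>+z. 2 * ennreal ((norm (snd (pdiff u (S k)) (fst z) (snd z)))\<^sup>2)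
        + 2 * ennreal ((norm (snd (pdiff (S k) v) (fst z) (snd z)))\<^sup>2) \<partial>P)"
      unfolding normX_eq[OF m1]
    proof (intro nn_integral_mono)
      fix z
      have "(norm (snd (pdiff u v) (fst z) (snd z)))\<^sup>2 \<le> 2 * (norm (snd (pdiff u (S k)) (fst z) (snd z)))\<^sup>2
          + 2 * (norm (snd (pdiff (S k) v) (fst z) (snd z)))\<^sup>2"
        using sq_tri[of "snd (pdiff u v) (fst z) (snd z)" "snd (pdiff (S k) v) (fst z) (snd z)"]
        by (simp add: pdiff_def)
      then have "ennreal ((norm (snd (pdiff u v) (fst z) (snd z)))\<^sup>2) \<le> ennreal (2 * (norm (snd (pdiff u (S k)) (fst z) (snd z)))\<^sup>2
          + 2 * (norm (snd (pdiff (S k) v) (fst z) (snd z)))\<^sup>2)" by (rule ennreal_leI)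
      then show "ennreal ((norm (snd (pdiff u v) (fst z) (snd z)))\<^sup>2) \<le> 2 * ennreal ((norm (snd (pdiff u (S k)) (fst z) (snd z)))\<^sup>2)
          + 2 * ennreal ((norm (snd (pdiff (S k) v) (fst z) (snd z)))\<^sup>2)"
        by (simp add: ennreal_plus ennreal_mult)
    qed
    also have "\<dots> = 2 * normXsq D G (pdiff u (S k)) + 2 * normXsq D G (pdiff (S k) v)"
    proof -
      have "(\<integral>\<^sup>+z. 2 * ennreal ((norm (snd (pdiff u (S k)) (fst z) (snd z)))\<^sup>2)
        + 2 * ennreal ((norm (snd (pdiff (S k) v) (fst z) (snd z)))\<^sup>2) \<partial>P) =
        (\<integral>\<^sup>+z. 2 * ennreal ((norm (snd (pdiff u (S k)) (fst z) (snd z)))\<^sup>2) \<partial>P) +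
        (\<integral>\<^sup>+z. 2 * ennreal ((norm (snd (pdiff (S k) v) (fst z) (snd z)))\<^sup>2) \<partial>P)"
        by (rule nn_integral_add[OF borel_measurable_times_ennreal[OF borel_measurable_const n2]
              borel_measurable_times_ennreal[OF borel_measurable_const n3]])
      then show ?thesis by (simp only: nn_integral_cmult[OF n2] nn_integral_cmult[OF n3] normX_eq[OF m2] normX_eq[OF m3])
    qed
    finally show ?thesis .
  qed
  have "normXsq D G (pdiff u v) < ennreal \<epsilon>"
  proof -
    obtain r where r: "normXsq D G (pdiff u (S k)) = ennreal r" "0 \<le> r"
      using part1 by (cases "normXsq D G (pdiff u (S k))" rule: ennreal_cases) auto
    have rl: "r < \<epsilon> / 4" using part1 r eps by (simp add: ennreal_less_iff)
    have "normXsq D G (pdiff u v) \<le> 2 * ennreal r + 2 * ennreal (\<epsilon> / 4)"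
      using split part2' r(1) by (metis add_left_mono mult_left_mono zero_le order_trans)
    also have "\<dots> = ennreal (2 * r + 2 * (\<epsilon> / 4))"
    proof -
      have "ennreal (2 * r + 2 * (\<epsilon> / 4)) = ennreal (2 * r) + ennreal (2 * (\<epsilon> / 4))"
        using r(2) eps by (intro ennreal_plus) auto
      also have "ennreal (2 * r) = 2 * ennreal r" using r(2) by (simp add: ennreal_mult)
      also have "ennreal (2 * (\<epsilon> / 4)) = 2 * ennreal (\<epsilon> / 4)" using ennreal_mult[of 2 "\<epsilon> / 4"] eps by simp
      finally show ?thesis by simp
    qed
    also have "\<dots> < ennreal \<epsilon>" using rl r(2) eps by (intro ennreal_lessI) auto
    finally show ?thesis .
  qed
  then show ?thesis using vT by blast
qed

end



context PS begin

lemma cut_lim: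
  assumes uX: "u \<in> Xspace D G" and ai: "integrable P (Qv C (snd u) (snd u))"
  shows "((\<lambda>\<tau>. normCsq D G C (cut_above \<gamma> \<tau> u)) \<longlongrightarrow> 0) at_top"
proof -
  have mu: "(\<lambda>(x,\<omega>). snd u x \<omega>) \<in> borel_measurable (lborel \<Otimes>\<^sub>M G)" by (rule X_meas[OF uX])
  note gm[measurable]
  define s where "s \<tau> z = indicator {\<omega>. \<gamma> \<omega> > \<tau>} (snd z) * Qv C (snd u) (snd u) z" for \<tau> :: real and z
  have mQ: "Qv C (snd u) (snd u) \<in> borel_measurable P" by (rule QvP_meas[OF mu mu])
  have ms: "s \<tau> \<in> borel_measurable P" for \<tau>
  proof -
    have "(\<lambda>z. indicator {\<omega>. \<gamma> \<omega> > \<tau>} (snd z) :: real) \<in> borel_measurable P" by measurable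
    then show ?thesis unfolding s_def using mQ by (rule borel_measurable_times)
  qed
  have is_: "integrable P (s \<tau>)" for \<tau>
    by (rule Bochner_Integration.integrable_bound[OF ai ms]) (auto intro!: AE_I2 simp: s_def indicator_def Qv_nonneg)
  have eq: "normCsq D G C (cut_above \<gamma> \<tau> u) = ennreal (\<integral>z. s \<tau> z \<partial>P)" for \<tau>
  proof -
    have mc: "(\<lambda>(x,\<omega>). snd (cut_above \<gamma> \<tau> u) x \<omega>) \<in> borel_measurable (lborel \<Otimes>\<^sub>M G)"
    proof -
      have "(\<lambda>(x,\<omega>). indicator {\<omega>. \<gamma> \<omega> > \<tau>} \<omega> *\<^sub>R snd u x \<omega>) \<in> borel_measurable (lborel \<Otimes>\<^sub>M G)"
        using mu by measurable
      then show ?thesis by (simp add: cut_above_def)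
    qed
    have "normCsq D G C (cut_above \<gamma> \<tau> u) = (\<integral>\<^sup>+z. ennreal (s \<tau> z) \<partial>P)"
      unfolding normC_eq[OF mc]
      by (intro nn_integral_cong) (simp add: s_def Qv_def cut_above_def indicator_def)
    also have "\<dots> = ennreal (\<integral>z. s \<tau> z \<partial>P)"
      by (rule int_finite[OF is_]) (simp add: s_def Qv_nonneg)
    finally show ?thesis .
  qed
  have "((\<lambda>\<tau>. \<integral>z. s \<tau> z \<partial>P) \<longlongrightarrow> (\<integral>z. 0 \<partial>P)) at_top"
  proof (rule integral_dominated_convergence_at_top[where w="Qv C (snd u) (snd u)"])
    show "(\<lambda>z. 0::real) \<in> borel_measurable P" by simp
    show "s \<tau> \<in> borel_measurable P" for \<tau> by (rule ms)
    show "integrable P (Qv C (snd u) (snd u))" by (rule ai)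
    show "AE z in P. ((\<lambda>\<tau>. s \<tau> z) \<longlongrightarrow> 0) at_top"
    proof (rule AE_I2)
      fix z
      have "\<forall>\<^sub>F \<tau> in at_top. s \<tau> z = 0"
        unfolding eventually_at_top_linorder
        by (intro exI[of _ "\<gamma> (snd z)"]) (auto simp: s_def indicator_def)
      then show "((\<lambda>\<tau>. s \<tau> z) \<longlongrightarrow> 0) at_top" by (rule tendsto_eventually)
    qed
    show "\<forall>\<^sub>F \<tau> in at_top. AE z in P. norm (s \<tau> z) \<le> Qv C (snd u) (snd u) z"
      by (intro always_eventually allI AE_I2) (auto simp: s_def indicator_def Qv_nonneg)
  qed
  then have "((\<lambda>\<tau>. ennreal (\<integral>z. s \<tau> z \<partial>P)) \<longlongrightarrow> ennreal 0) at_top"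
    by (intro tendsto_ennrealI) simp
  then show ?thesis unfolding eq by simp
qed

end



theorem proposition10:
  fixes D :: "(real^'n::finite) set"
    and \<Gamma>1 :: "(real^'g::finite) measure" and \<Gamma>2 :: "(real^'v::finite) measure"
    and C :: "real^'n \<Rightarrow> (real^'g) \<times> (real^'v) \<Rightarrow> real^'n^'n"
    and \<alpha> :: real and \<gamma> :: "(real^'g) \<times> (real^'v) \<Rightarrow> real"
    and f :: "(real^'n \<Rightarrow> real) \<Rightarrow> (real^'n \<Rightarrow> real^'n) \<Rightarrow> real"
    and V :: "nat \<Rightarrow> ((real^'n \<Rightarrow> real) \<times> (real^'n \<Rightarrow> real^'n)) set"
    and W :: "nat \<Rightarrow> ((real^'g) \<times> (real^'v) \<Rightarrow> real) set"
    and u :: "('n, (real^'g) \<times> (real^'v)) field"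
  assumes D: "bounded D" "open D" "smooth_boundary D"
    and G1: "prob_space \<Gamma>1" "sets \<Gamma>1 = sets borel"
    and G2: "prob_space \<Gamma>2" "sets \<Gamma>2 = sets borel"
    and f: "H_minus1 D f"
    and C_meas: "(\<lambda>(x, \<omega>). C x \<omega>) \<in> borel_measurable (lborel \<Otimes>\<^sub>M (\<Gamma>1 \<Otimes>\<^sub>M \<Gamma>2))"
    and C_spd: "\<forall>x\<in>D. \<forall>\<omega>. transpose (C x \<omega>) = C x \<omega> \<and> (\<forall>h. h \<noteq> 0 \<longrightarrow> h \<bullet> (C x \<omega> *v h) > 0)"
    and alpha: "\<alpha> > 0"
    and gamma: "\<gamma> \<in> borel_measurable (\<Gamma>1 \<Otimes>\<^sub>M \<Gamma>2)" "\<forall>\<omega>. \<gamma> \<omega> > 0"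
    and ellip: "AE \<omega> in \<Gamma>1 \<Otimes>\<^sub>M \<Gamma>2. AE x in lborel. x \<in> D \<longrightarrow>
                 (\<forall>h. \<alpha> * (norm h)\<^sup>2 \<le> h \<bullet> (C x \<omega> *v h) \<and> h \<bullet> (C x \<omega> *v h) \<le> \<gamma> \<omega> * (norm h)\<^sup>2)"
    and V: "\<forall>q. fd_subspace (V q) \<and> V q \<subseteq> H10 D" "\<forall>q. V q \<subseteq> V (Suc q)"
           "\<forall>vg\<in>H10 D. \<forall>\<epsilon>>0. \<exists>q. \<exists>wh\<in>V q.
              H1sq D (\<lambda>x. fst vg x - fst wh x, \<lambda>x. snd vg x - snd wh x) < ennreal \<epsilon>"
    and W: "\<forall>p. fd_fspace (W p) \<and> W p \<subseteq> L2 (\<Gamma>1 \<Otimes>\<^sub>M \<Gamma>2)" "\<forall>p. W p \<subseteq> W (Suc p)"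
           "\<forall>\<psi>\<in>L2 (\<Gamma>1 \<Otimes>\<^sub>M \<Gamma>2). \<forall>\<epsilon>>0. \<exists>p. \<exists>\<phi>\<in>W p.
              (\<integral>\<^sup>+ \<omega>. ennreal ((\<psi> \<omega> - \<phi> \<omega>)\<^sup>2) \<partial>(\<Gamma>1 \<Otimes>\<^sub>M \<Gamma>2)) < ennreal \<epsilon>"
    and u: "galerkin_sol D (\<Gamma>1 \<Otimes>\<^sub>M \<Gamma>2) C f (Xspace D (\<Gamma>1 \<Otimes>\<^sub>M \<Gamma>2)) u"
  shows "(\<forall>\<tau>>0. \<forall>q p uN.
            galerkin_sol D (\<Gamma>1 \<Otimes>\<^sub>M \<Gamma>2) C f (tensor (V q) (trunc_space \<gamma> \<tau> (W p))) uN \<longrightarrow>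
            normCsq D (\<Gamma>1 \<Otimes>\<^sub>M \<Gamma>2) C (pdiff u uN)
              \<le> ennreal \<tau> * (INF v\<in>tensor (V q) (W p). normXsq D (\<Gamma>1 \<Otimes>\<^sub>M \<Gamma>2) (pdiff u v))
                + normCsq D (\<Gamma>1 \<Otimes>\<^sub>M \<Gamma>2) C (cut_above \<gamma> \<tau> u))
       \<and> (\<exists>qf pf :: real \<Rightarrow> nat.
            (\<forall>\<tau>>0. \<exists>uN. galerkin_sol D (\<Gamma>1 \<Otimes>\<^sub>M \<Gamma>2) C f
                          (tensor (V (qf \<tau>)) (trunc_space \<gamma> \<tau> (W (pf \<tau>)))) uN) \<and>
            (\<forall>U. (\<forall>\<tau>>0. galerkin_sol D (\<Gamma>1 \<Otimes>\<^sub>M \<Gamma>2) C f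
                          (tensor (V (qf \<tau>)) (trunc_space \<gamma> \<tau> (W (pf \<tau>)))) (U \<tau>)) \<longrightarrow>
                 ((\<lambda>\<tau>. normCsq D (\<Gamma>1 \<Otimes>\<^sub>M \<Gamma>2) C (pdiff u (U \<tau>))) \<longlongrightarrow> 0) at_top))"
proof -
  let ?G = "\<Gamma>1 \<Otimes>\<^sub>M \<Gamma>2"
  have pG: "prob_space ?G" by (rule prob_space_pair[OF G1(1) G2(1)])
  have ellU: "AE \<omega> in ?G. AE x in MD D. \<forall>h. h \<bullet> (C x \<omega> *v h) \<le> \<gamma> \<omega> * (norm h)\<^sup>2"
    using ellip
  proof eventually_elim
    case (elim \<omega>)
    have "AE x in lborel. x \<in> D \<longrightarrow> (\<forall>h. h \<bullet> (C x \<omega> *v h) \<le> \<gamma> \<omega> * (norm h)\<^sup>2)"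
      using elim by eventually_elim blast
    then show ?case unfolding MD_def using D(2) by (subst AE_restrict_space_iff) auto
  qed
  interpret PS D ?G C \<gamma>
    by (rule PS.intro[OF D(2) pG C_meas C_spd gamma(1) ellU])
  have uX: "u \<in> Xspace D ?G" and au: "\<forall>W\<in>Xspace D ?G. a_integrable D ?G C u W \<and> a_form D ?G C u W = F_form ?G f W"
    using u by (auto simp: galerkin_sol_def)
  have auu: "integrable P (Qv C (snd u) (snd u))" using au uX by (auto simp: a_int_iff)
  have P1: "\<forall>\<tau>>0. \<forall>q p uN.
            galerkin_sol D (\<Gamma>1 \<Otimes>\<^sub>M \<Gamma>2) C f (tensor (V q) (trunc_space \<gamma> \<tau> (W p))) uN \<longrightarrow>
            normCsq D (\<Gamma>1 \<Otimes>\<^sub>M \<Gamma>2) C (pdiff u uN)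
              \<le> ennreal \<tau> * (INF v\<in>tensor (V q) (W p). normXsq D (\<Gamma>1 \<Otimes>\<^sub>M \<Gamma>2) (pdiff u v))
                + normCsq D (\<Gamma>1 \<Otimes>\<^sub>M \<Gamma>2) C (cut_above \<gamma> \<tau> u)"
  proof (intro allI impI)
    fix \<tau> :: real and q p uN
    assume tp: "\<tau> > 0" and uN: "galerkin_sol D (\<Gamma>1 \<Otimes>\<^sub>M \<Gamma>2) C f (tensor (V q) (trunc_space \<gamma> \<tau> (W p))) uN"
    have s1: "V q \<subseteq> H10 D" using V(1) by blast
    have s2: "W p \<subseteq> L2 ?G" using W(1) by blast
    show "normCsq D (\<Gamma>1 \<Otimes>\<^sub>M \<Gamma>2) C (pdiff u uN)
              \<le> ennreal \<tau> * (INF v\<in>tensor (V q) (W p). normXsq D (\<Gamma>1 \<Otimes>\<^sub>M \<Gamma>2) (pdiff u v))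
                + normCsq D (\<Gamma>1 \<Otimes>\<^sub>M \<Gamma>2) C (cut_above \<gamma> \<tau> u)"
      by (rule part1[OF s1 s2 u tp uN])
  qed
  have VH: "\<forall>q. V q \<subseteq> H10 D" and WL: "\<forall>p. W p \<subseteq> L2 ?G" using V(1) W(1) by auto
  have "\<forall>\<tau>. \<exists>qp. \<tau> > 0 \<longrightarrow> (\<exists>v\<in>tensor (V (fst qp)) (W (snd qp)). normXsq D ?G (pdiff u v) < ennreal (1 / \<tau>\<^sup>2))"
  proof
    fix \<tau> :: real
    show "\<exists>qp. \<tau> > 0 \<longrightarrow> (\<exists>v\<in>tensor (V (fst qp)) (W (snd qp)). normXsq D ?G (pdiff u v) < ennreal (1 / \<tau>\<^sup>2))"
    proof (cases "\<tau> > 0")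
      case True
      then have "1 / \<tau>\<^sup>2 > 0" by simp
      from dens[OF VH V(2) V(3) WL W(2) W(3) uX this] obtain q p where
        "\<exists>v\<in>tensor (V q) (W p). normXsq D ?G (pdiff u v) < ennreal (1 / \<tau>\<^sup>2)" by blast
      then show ?thesis by (intro exI[of _ "(q, p)"]) simp
    qed simp
  qed
  then obtain QP where QP: "\<forall>\<tau>. \<tau> > 0 \<longrightarrow> (\<exists>v\<in>tensor (V (fst (QP \<tau>))) (W (snd (QP \<tau>))). normXsq D ?G (pdiff u v) < ennreal (1 / \<tau>\<^sup>2))"
    by (rule choice[elim_format]) blast
  have EX: "\<exists>uN. galerkin_sol D ?G C f (tensor (V (fst (QP \<tau>))) (trunc_space \<gamma> \<tau> (W (snd (QP \<tau>))))) uN"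
    if "\<tau> > 0" for \<tau>
  proof -
    have "fd_subspace (V (fst (QP \<tau>)))" using V(1) by blast
    then have "\<exists>(K::nat) b. V (fst (QP \<tau>)) = {(\<lambda>x. \<Sum>i<K. c i * fst (b i) x, \<lambda>x. \<Sum>i<K. c i *\<^sub>R snd (b i) x) | c. True}"
      unfolding fd_subspace_def by blast
    then obtain K :: nat and b where Vd: "V (fst (QP \<tau>)) = {(\<lambda>x. \<Sum>i<K. c i * fst (b i) x, \<lambda>x. \<Sum>i<K. c i *\<^sub>R snd (b i) x) | c. True}"
      by (elim exE)
    have "fd_fspace (W (snd (QP \<tau>)))" using W(1) by blast
    then have "\<exists>(L::nat) cc. W (snd (QP \<tau>)) = {(\<lambda>\<omega>. \<Sum>j<L. a j * cc j \<omega>) | a. True}"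
      unfolding fd_fspace_def by blast
    then obtain L :: nat and cc where Wd: "W (snd (QP \<tau>)) = {(\<lambda>\<omega>. \<Sum>j<L. a j * cc j \<omega>) | a. True}"
      by (elim exE)
    have s1: "V (fst (QP \<tau>)) \<subseteq> H10 D" using V(1) by blast
    have s2: "W (snd (QP \<tau>)) \<subseteq> L2 ?G" using W(1) by blast
    have t0: "0 \<le> \<tau>" using that by simp
    show ?thesis by (rule exist[OF Vd Wd s1 s2 u t0])
  qed
  have P2: "\<forall>U. (\<forall>\<tau>>0. galerkin_sol D ?G C f (tensor (V (fst (QP \<tau>))) (trunc_space \<gamma> \<tau> (W (snd (QP \<tau>))))) (U \<tau>)) \<longrightarrow>
      ((\<lambda>\<tau>. normCsq D ?G C (pdiff u (U \<tau>))) \<longlongrightarrow> 0) at_top"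
  proof (intro allI impI)
    fix U assume UG: "\<forall>\<tau>>0. galerkin_sol D ?G C f (tensor (V (fst (QP \<tau>))) (trunc_space \<gamma> \<tau> (W (snd (QP \<tau>))))) (U \<tau>)"
    have bnd: "normCsq D ?G C (pdiff u (U \<tau>)) \<le> ennreal (1 / \<tau>) + normCsq D ?G C (cut_above \<gamma> \<tau> u)"
      if tp: "\<tau> > 0" for \<tau>
    proof -
      obtain v where v: "v \<in> tensor (V (fst (QP \<tau>))) (W (snd (QP \<tau>)))" "normXsq D ?G (pdiff u v) < ennreal (1 / \<tau>\<^sup>2)"
        using QP tp by blast
      have "normCsq D ?G C (pdiff u (U \<tau>)) \<le> ennreal \<tau> * (INF v\<in>tensor (V (fst (QP \<tau>))) (W (snd (QP \<tau>))). normXsq D ?G (pdiff u v))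
          + normCsq D ?G C (cut_above \<gamma> \<tau> u)"
        using P1[rule_format, OF tp UG[rule_format, OF tp]] .
      also have "ennreal \<tau> * (INF v\<in>tensor (V (fst (QP \<tau>))) (W (snd (QP \<tau>))). normXsq D ?G (pdiff u v)) \<le> ennreal \<tau> * ennreal (1 / \<tau>\<^sup>2)"
        by (intro mult_left_mono order_trans[OF INF_lower[OF v(1)]]) (use v(2) in auto)
      also have "ennreal \<tau> * ennreal (1 / \<tau>\<^sup>2) = ennreal (1 / \<tau>)"
        using tp by (simp add: ennreal_mult[symmetric] power2_eq_square)
      finally show ?thesis by (simp add: add_right_mono)
    qed
    have lim: "((\<lambda>\<tau>. ennreal (1 / \<tau>) + normCsq D ?G C (cut_above \<gamma> \<tau> u)) \<longlongrightarrow> 0 + 0) at_top"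
    proof (intro tendsto_add)
      have "((\<lambda>\<tau>::real. inverse \<tau>) \<longlongrightarrow> 0) at_top" by (rule tendsto_inverse_0_at_top[OF filterlim_ident])
      then have "((\<lambda>\<tau>::real. ennreal (1 / \<tau>)) \<longlongrightarrow> ennreal 0) at_top" by (intro tendsto_ennrealI) (simp add: divide_inverse)
      then show "((\<lambda>\<tau>::real. ennreal (1 / \<tau>)) \<longlongrightarrow> 0) at_top" by simp
      show "((\<lambda>\<tau>. normCsq D ?G C (cut_above \<gamma> \<tau> u)) \<longlongrightarrow> 0) at_top" by (rule cut_lim[OF uX auu])
    qed
    show "((\<lambda>\<tau>. normCsq D ?G C (pdiff u (U \<tau>))) \<longlongrightarrow> 0) at_top"
    proof (rule tendsto_sandwich[OF _ _ tendsto_const])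
      show "\<forall>\<^sub>F \<tau> in at_top. 0 \<le> normCsq D ?G C (pdiff u (U \<tau>))" by simp
      show "\<forall>\<^sub>F \<tau> in at_top. normCsq D ?G C (pdiff u (U \<tau>)) \<le> ennreal (1 / \<tau>) + normCsq D ?G C (cut_above \<gamma> \<tau> u)"
        unfolding eventually_at_top_linorder by (rule exI[of _ 1], intro allI impI bnd) simp
      show "((\<lambda>\<tau>. ennreal (1 / \<tau>) + normCsq D ?G C (cut_above \<gamma> \<tau> u)) \<longlongrightarrow> 0) at_top" using lim by simp
    qed
  qed
  have EX': "\<forall>\<tau>>0. \<exists>uN. galerkin_sol D ?G C f (tensor (V (fst (QP \<tau>))) (trunc_space \<gamma> \<tau> (W (snd (QP \<tau>))))) uN"
    using EX by blast
  show ?thesis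
    by (intro conjI P1 exI[of _ "\<lambda>\<tau>. fst (QP \<tau>)"] exI[of _ "\<lambda>\<tau>. snd (QP \<tau>)"] EX' P2)
qed


end
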